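(* Let $R$ be a nonzero $m\times m$ rational matrix function with no poles on $\mathbb{T}$ given by $R(z)=zC(I_n-zA)^{-1}\Gamma+R_0+\Gamma^*(zI_n-A^* )^{-1}C^*$ with $A$ stable $n\times n$, assume $R(\zeta)\ge0$ for all $\zeta\in\mathbb{T}$, and assume the pair $\{C,A\}$ is observable. Let $\Phi\in\mathfrak{R}H^\infty_{r\times m}$ be an outer spectral factor of $R$, $\mathcal{X}_\Phi=\{x\in\mathbb{C}^n:W_{obs}x\in\operatorname{Im}T_\Phi^*\}$, and $C_\Phi$ an $r\times n$ matrix with $\Phi(z)=\Phi(0)+zC_\Phi(I_n-zA)^{-1}\Gamma$ and $W_{obs}x=T_\Phi^*W_{\Phi,obs}x$ for $x\in\mathcal{X}_\Phi$; let $Q_\Phi$ be the observability Gramian of $\{C_\Phi,A\}$. Then $\Omega_\Phi=E_{\mathcal{X}_\Phi}^*Q_\Phi E_{\mathcal{X}_\Phi}:\mathcal{X}_\Phi\to\mathcal{X}_\Phi$ is invertible, and the orthogonal projection of $\ell^2_+(\mathbb{C}^r)$ onto the finite-dimensional space $\mathcal{M}_\Phi=\{f\in\ell^2_+(\mathbb{C}^r):T_\Phi^*f\in\operatorname{Im}W_{obs}\}$ is \[ P_{\mathcal{M}_\Phi}=W_{\Phi,obs}\,\Delta\, W_{\Phi,obs}^*,\qquad \Delta=E_{\mathcal{X}_\Phi}\Omega_\Phi^{-1}E_{\mathcal{X}_\Phi}^*:\mathbb{C}^n\to\mathbb{C}^n. \]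
   Context: $\mathbb{T}$ is the unit circle; a stable matrix has all eigenvalues in the open unit disc. $\mathfrak{R}H^\infty_{k\times l}$: $k\times l$ rational matrix functions without poles in the closed unit disc. $\ell^2_+(\mathbb{C}^k)$: square summable $\mathbb{C}^k$-valued sequences indexed by $j\ge0$; $T_\Omega$: block Toeplitz operator with $(i,j)$ block $\Omega_{i-j}$. $W_{obs}=\operatorname{col}(CA^j)_{j\ge0}$, $W_{\Phi,obs}=\operatorname{col}(C_\Phi A^j)_{j\ge0}$, $Q_\Phi=\sum_{\nu\ge0}(A^* )^\nu C_\Phi^*C_\Phi A^\nu$. An outer spectral factor of $R$ is $\Phi\in\mathfrak{R}H^\infty_{r\times m}$ with $R(z)=\Phi(1/\bar z)^*\Phi(z)$ and $T_\Phi$ of dense range. Observable: observability operator injective. $E_{\mathcal{X}_\Phi}:\mathcal{X}_\Phi\to\mathbb{C}^n$ is the canonical embedding, so $E_{\mathcal{X}_\Phi}^*$ is the orthogonal projection onto $\mathcal{X}_\Phi$ viewed as a map into $\mathcal{X}_\Phi$. *)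

theory Defs
  imports "HOL-Analysis.Analysis" "HOL-Computational_Algebra.Polynomial"
begin

text \<open>Finite-dimensional complex linear algebra on the type-indexed spaces
  complex^'n (vectors) and complex^'n^'m (m x n matrices, rows indexed by 'm).\<close>

definition cadj :: "complex^'n^'m \<Rightarrow> complex^'m^'n" where
  "cadj M = (\<chi> i j. cnj (M $ j $ i))"

definition csmat :: "complex \<Rightarrow> complex^'n^'m \<Rightarrow> complex^'n^'m" where
  "csmat c M = (\<chi> i j. c * M $ i $ j)"

definition mpow :: "complex^'n^'n \<Rightarrow> nat \<Rightarrow> complex^'n^'n" where
  "mpow A k = (((**) A) ^^ k) (mat 1)"

definition cinner :: "complex^'n \<Rightarrow> complex^'n \<Rightarrow> complex" where
  "cinner x y = (\<Sum>i\<in>UNIV. x $ i * cnj (y $ i))"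

definition stable :: "complex^'n^'n \<Rightarrow> bool" where
  "stable A \<longleftrightarrow> (\<forall>\<mu> v. v \<noteq> 0 \<and> A *v v = \<mu> *s v \<longrightarrow> norm \<mu> < 1)"

definition psd :: "complex^'n^'n \<Rightarrow> bool" where
  "psd M \<longleftrightarrow> (\<forall>x. Im (cinner (M *v x) x) = 0 \<and> Re (cinner (M *v x) x) \<ge> 0)"

definition observable :: "complex^'n^'m \<Rightarrow> complex^'n^'n \<Rightarrow> bool" where
  "observable C A \<longleftrightarrow> (\<forall>x. (\<forall>j. C *v (mpow A j *v x) = 0) \<longrightarrow> x = 0)"

definition Wobs :: "complex^'n^'m \<Rightarrow> complex^'n^'n \<Rightarrow> complex^'n \<Rightarrow> nat \<Rightarrow> complex^'m" where
  "Wobs C A x = (\<lambda>j. C *v (mpow A j *v x))"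

definition Wobs_adj :: "complex^'n^'m \<Rightarrow> complex^'n^'n \<Rightarrow> (nat \<Rightarrow> complex^'m) \<Rightarrow> complex^'n" where
  "Wobs_adj C A f = (\<Sum>j. cadj (mpow A j) *v (cadj C *v f j))"

definition obs_gramian :: "complex^'n^'m \<Rightarrow> complex^'n^'n \<Rightarrow> complex^'n^'n" where
  "obs_gramian C A = (\<Sum>\<nu>. cadj (mpow A \<nu>) ** cadj C ** C ** mpow A \<nu>)"

definition l2 :: "(nat \<Rightarrow> complex^'k) set" where
  "l2 = {f. summable (\<lambda>j. (norm (f j))\<^sup>2)}"

definition l2inner :: "(nat \<Rightarrow> complex^'k) \<Rightarrow> (nat \<Rightarrow> complex^'k) \<Rightarrow> complex" where
  "l2inner f g = (\<Sum>j. cinner (f j) (g j))"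

definition l2norm :: "(nat \<Rightarrow> complex^'k) \<Rightarrow> real" where
  "l2norm f = sqrt (\<Sum>j. (norm (f j))\<^sup>2)"

definition cproj :: "(complex^'n) set \<Rightarrow> complex^'n \<Rightarrow> complex^'n" where
  "cproj X x = (THE y. y \<in> X \<and> (\<forall>z\<in>X. cinner (x - y) z = 0))"

definition l2proj :: "(nat \<Rightarrow> complex^'k) set \<Rightarrow> (nat \<Rightarrow> complex^'k) \<Rightarrow> (nat \<Rightarrow> complex^'k)" where
  "l2proj M f = (THE g. g \<in> M \<and> (\<forall>h\<in>M. l2inner (\<lambda>j. f j - g j) h = 0))"

text \<open>Rational matrix functions without poles in the closed unit disc (RH^infty_{r x m}):
  entrywise quotients of polynomials by a common denominator q with no zeros
  in the closed unit disc; the (total) function agrees with the quotient wherever q is nonzero.\<close>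
definition rat_Hinf :: "(complex \<Rightarrow> complex^'m^'r) \<Rightarrow> bool" where
  "rat_Hinf \<Phi> \<longleftrightarrow> (\<exists>(P :: complex poly^'m^'r) q.
      (\<forall>z. norm z \<le> 1 \<longrightarrow> poly q z \<noteq> 0) \<and>
      (\<forall>z. poly q z \<noteq> 0 \<longrightarrow> \<Phi> z = (\<chi> i j. poly (P $ i $ j) z / poly q z)))"

definition regular_at :: "(complex \<Rightarrow> complex^'m^'r) \<Rightarrow> complex \<Rightarrow> bool" where
  "regular_at \<Phi> z \<longleftrightarrow> (\<forall>i j. (\<lambda>w. \<Phi> w $ i $ j) analytic_on {z})"

definition taylor_coeff :: "(complex \<Rightarrow> complex^'m^'r) \<Rightarrow> nat \<Rightarrow> complex^'m^'r" where
  "taylor_coeff \<Phi> k = (\<chi> i j. (deriv ^^ k) (\<lambda>w. \<Phi> w $ i $ j) 0 / fact k)"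

definition toeplitz :: "(complex \<Rightarrow> complex^'m^'r) \<Rightarrow> (nat \<Rightarrow> complex^'m) \<Rightarrow> nat \<Rightarrow> complex^'r" where
  "toeplitz \<Phi> f = (\<lambda>i. \<Sum>j\<le>i. taylor_coeff \<Phi> (i - j) *v f j)"

definition toeplitz_adj :: "(complex \<Rightarrow> complex^'m^'r) \<Rightarrow> (nat \<Rightarrow> complex^'r) \<Rightarrow> nat \<Rightarrow> complex^'m" where
  "toeplitz_adj \<Phi> g = (\<lambda>i. \<Sum>k. cadj (taylor_coeff \<Phi> k) *v g (i + k))"

text \<open>Outer spectral factor of R (R given as a total function, considered at the points
  where it is defined): Phi in RH^infty, R(z) = Phi(1/conj z)^* Phi(z) at all points where
  both sides are defined, and T_Phi has dense range in ell^2_+(C^r).\<close>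
definition outer_spectral_factor ::
  "(complex \<Rightarrow> complex^'m^'m) \<Rightarrow> (complex \<Rightarrow> bool) \<Rightarrow> (complex \<Rightarrow> complex^'m^'r) \<Rightarrow> bool" where
  "outer_spectral_factor R Rdef \<Phi> \<longleftrightarrow>
     rat_Hinf \<Phi> \<and>
     (\<forall>z. z \<noteq> 0 \<and> Rdef z \<and> regular_at \<Phi> z \<and> regular_at \<Phi> (1 / cnj z) \<longrightarrow>
          R z = cadj (\<Phi> (1 / cnj z)) ** \<Phi> z) \<and>
     (\<forall>g\<in>l2. \<forall>\<epsilon>>0. \<exists>f\<in>l2. l2norm (\<lambda>i. toeplitz \<Phi> f i - g i) < \<epsilon>)"

end

theory Submission
  imports Defs "Jordan_Normal_Form.Spectral_Radius" "HOL-Complex_Analysis.Complex_Analysis"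
begin

no_notation fps_nth (infixl "$" 75)
no_notation Matrix.vec_index (infixl "$" 100)
hide_const (open) Matrix.mat Matrix.vec Determinant.det

definition Jm :: "(nat \<Rightarrow> 'n::finite) \<Rightarrow> complex^'n^'n \<Rightarrow> complex Matrix.mat" where
  "Jm h M = Matrix.mat CARD('n) CARD('n) (\<lambda>(i,j). M $ h i $ h j)"

lemma Jm_carrier: "Jm h (M::complex^'n::finite^'n) \<in> carrier_mat CARD('n) CARD('n)"
  by (simp add: Jm_def)

lemma Jm_mult:
  assumes h: "bij_betw h {0..<CARD('n)} (UNIV::'n::finite set)"
  shows "Jm h (M ** P) = Jm h M * Jm h P"
proof (rule eq_matI)
  fix i j assume i: "i < dim_row (Jm h M * Jm h P)" and j: "j < dim_col (Jm h M * Jm h P)"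
  hence i': "i < CARD('n)" and j': "j < CARD('n)" by (auto simp: Jm_def)
  have "(Jm h M * Jm h P) $$ (i,j) = (\<Sum>k\<in>{0..<CARD('n)}. M $ h i $ h k * P $ h k $ h j)"
    using i' j' by (simp add: Jm_def scalar_prod_def)
  also have "\<dots> = (\<Sum>l\<in>UNIV. M $ h i $ l * P $ l $ h j)"
    using sum.reindex_bij_betw[OF h, of "\<lambda>l. M $ h i $ l * P $ l $ h j"] by simp
  finally show "Jm h (M ** P) $$ (i, j) = (Jm h M * Jm h P) $$ (i, j)"
    using i' j' by (simp add: Jm_def matrix_matrix_mult_def)
qed (auto simp: Jm_def)

lemma Jm_one:
  assumes h: "bij_betw h {0..<CARD('n)} (UNIV::'n::finite set)"
  shows "Jm h (Finite_Cartesian_Product.mat 1 :: complex^'n^'n) = 1\<^sub>m CARD('n)"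
proof (rule eq_matI)
  fix i j assume "i < dim_row (1\<^sub>m CARD('n))" "j < dim_col (1\<^sub>m CARD('n))"
  hence i': "i < CARD('n)" and j': "j < CARD('n)" by auto
  have "h i = h j \<longleftrightarrow> i = j" using h i' j' unfolding bij_betw_def inj_on_def by auto
  thus "Jm h (Finite_Cartesian_Product.mat 1) $$ (i, j) = 1\<^sub>m CARD('n) $$ (i, j)"
    using i' j' by (simp add: Jm_def Finite_Cartesian_Product.mat_def)
qed (auto simp: Jm_def)

lemma mpow_Suc: "mpow A (Suc k) = A ** mpow A k"
  by (simp add: mpow_def)

lemma mpow_0: "mpow A 0 = Finite_Cartesian_Product.mat 1"
  by (simp add: mpow_def)

lemma mpow_Suc': "mpow A (Suc k) = mpow A k ** A"
proof (induction k)
  case 0 thus ?case by (simp add: mpow_Suc mpow_0)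
next
  case (Suc k)
  have "mpow A (Suc (Suc k)) = A ** (mpow A k ** A)" using Suc by (simp add: mpow_Suc)
  also have "\<dots> = mpow A (Suc k) ** A" by (simp add: mpow_Suc matrix_mul_assoc)
  finally show ?case .
qed

lemma Jm_pow:
  assumes h: "bij_betw h {0..<CARD('n)} (UNIV::'n::finite set)"
  shows "Jm h (mpow (A::complex^'n^'n) k) = Jm h A ^\<^sub>m k"
proof (induction k)
  case 0 thus ?case using Jm_one[OF h] by (simp add: mpow_0 Jm_def)
next
  case (Suc k) thus ?case by (simp add: mpow_Suc' Jm_mult[OF h])
qed

lemma Jm_eig:
  assumes h: "bij_betw h {0..<CARD('n)} (UNIV::'n::finite set)"
    and ev: "eigenvalue (Jm h M) e"
  shows "\<exists>w. w \<noteq> 0 \<and> (M::complex^'n^'n) *v w = e *s w"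
proof -
  obtain v where v: "v \<in> carrier_vec CARD('n)" "v \<noteq> 0\<^sub>v CARD('n)" "Jm h M *\<^sub>v v = e \<cdot>\<^sub>v v"
    using ev unfolding eigenvalue_def eigenvector_def by (auto simp: Jm_def)
  define g where "g = inv_into {0..<CARD('n)} h"
  have gh: "\<And>i. i < CARD('n) \<Longrightarrow> g (h i) = i" using h unfolding g_def bij_betw_def by auto
  have hg: "\<And>l. h (g l) = l" using h unfolding g_def bij_betw_def
    by (auto simp: f_inv_into_f)
  have gl: "\<And>l. g l < CARD('n)" using h unfolding g_def bij_betw_def
    by (metis atLeastLessThan_iff inv_into_into UNIV_I)
  define w :: "complex^'n" where "w = (\<chi> l. vec_index v (g l))"
  have "w \<noteq> 0"
  proof
    assume "w = 0"
    hence "\<And>i. i < CARD('n) \<Longrightarrow> vec_index v i = 0"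
      by (metis gh w_def vec_lambda_beta zero_index)
    hence "v = 0\<^sub>v CARD('n)" using v(1) by (intro eq_vecI) auto
    thus False using v(2) by simp
  qed
  moreover have "M *v w = e *s w"
  proof (rule Finite_Cartesian_Product.vec_eq_iff[THEN iffD2], rule allI)
    fix l
    have "(M *v w) $ l = (\<Sum>l'\<in>UNIV. M $ l $ l' * vec_index v (g l'))"
      by (simp add: matrix_vector_mult_def w_def)
    also have "\<dots> = (\<Sum>k\<in>{0..<CARD('n)}. M $ h (g l) $ h k * vec_index v k)"
      using sum.reindex_bij_betw[OF h, of "\<lambda>l'. M $ l $ l' * vec_index v (g l')"] by (simp add: hg gh)
    also have "\<dots> = vec_index (Jm h M *\<^sub>v v) (g l)"
      using gl v(1) by (simp add: Jm_def scalar_prod_def)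
    also have "\<dots> = e * vec_index v (g l)" using v(3) gl v(1) by simp
    finally show "(M *v w) $ l = (e *s w) $ l" by (simp add: w_def)
  qed
  ultimately show ?thesis by blast
qed

lemma csmat_pow: "mpow (csmat c A) k = csmat (c^k) (mpow A k)"
proof (induction k)
  case 0 thus ?case by (simp add: mpow_0 csmat_def Finite_Cartesian_Product.vec_eq_iff Finite_Cartesian_Product.mat_def)
next
  case (Suc k)
  show ?case unfolding mpow_Suc Suc
    by (simp add: csmat_def Finite_Cartesian_Product.vec_eq_iff matrix_matrix_mult_def sum_distrib_left algebra_simps)
qed

lemma stable_decay:
  fixes A :: "complex^'n^'n"
  assumes "stable A"
  shows "\<exists>c \<rho>. 0 < \<rho> \<and> \<rho> < 1 \<and> (\<forall>k i j. norm (mpow A k $ i $ j) \<le> c * \<rho> ^ k)"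
proof -
  obtain h where h: "bij_betw h {0..<CARD('n)} (UNIV::'n set)"
    using ex_bij_betw_nat_finite[of "UNIV::'n set"] by auto
  have N: "CARD('n) > 0" by simp
  have evA: "norm e < 1" if "eigenvalue (Jm h A) e" for e
    using Jm_eig[OF h that] assms unfolding stable_def by blast
  define s where "s = spectral_radius (Jm h A)"
  obtain e0 where "eigenvalue (Jm h A) e0" "s = norm e0"
    using spectral_radius_mem_max(1)[OF Jm_carrier N, of h A] unfolding s_def spectrum_def by auto
  hence s1: "s < 1" and s0: "0 \<le> s" using evA by auto
  define \<rho> where "\<rho> = (1 + s) / 2"
  have \<rho>: "0 < \<rho>" "\<rho> < 1" "s < \<rho>" using s0 s1 by (auto simp: \<rho>_def)
  define A' where "A' = csmat (complex_of_real (1/\<rho>)) A"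
  have A'A: "A = csmat (complex_of_real \<rho>) A'"
    using \<rho> by (simp add: A'_def csmat_def Finite_Cartesian_Product.vec_eq_iff)
  have "spectral_radius (Jm h A') < 1"
  proof -
    from spectral_radius_mem_max(1)[OF Jm_carrier N, of h A']
    obtain e where e: "eigenvalue (Jm h A') e" and se: "spectral_radius (Jm h A') = norm e"
      unfolding spectrum_def by auto
    from Jm_eig[OF h e] obtain w where w: "w \<noteq> 0" "A' *v w = e *s w" by auto
    have "A *v w = (complex_of_real \<rho> * e) *s w"
      using w(2) by (simp add: A'A csmat_def Finite_Cartesian_Product.vec_eq_iff matrix_vector_mult_def sum_distrib_left[symmetric] algebra_simps)
    hence "eigenvalue (Jm h A) (complex_of_real \<rho> * e)"
    proof -
      assume eq: "A *v w = (complex_of_real \<rho> * e) *s w"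
      define v where "v = Matrix.vec CARD('n) (\<lambda>i. w $ h i)"
      have vc: "v \<in> carrier_vec CARD('n)" by (simp add: v_def)
      have "v \<noteq> 0\<^sub>v CARD('n)"
      proof
        assume v0: "v = 0\<^sub>v CARD('n)"
        have "w = 0"
        proof (rule Finite_Cartesian_Product.vec_eq_iff[THEN iffD2], rule allI)
          fix l
          obtain i where "i < CARD('n)" "h i = l" using h unfolding bij_betw_def by (metis UNIV_I atLeastLessThan_iff imageE)
          thus "w $ l = 0 $ l" using v0 unfolding v_def by (metis index_vec index_zero_vec(1) zero_index)
        qed
        thus False using w(1) by simp
      qed
      moreover have "Jm h A *\<^sub>v v = (complex_of_real \<rho> * e) \<cdot>\<^sub>v v"
      proof (rule eq_vecI)
        fix i assume i: "i < dim_vec ((complex_of_real \<rho> * e) \<cdot>\<^sub>v v)"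
        hence i': "i < CARD('n)" by (simp add: v_def)
        have "vec_index (Jm h A *\<^sub>v v) i = (\<Sum>k\<in>{0..<CARD('n)}. A $ h i $ h k * w $ h k)"
          using i' by (simp add: Jm_def v_def scalar_prod_def)
        also have "\<dots> = (\<Sum>l\<in>UNIV. A $ h i $ l * w $ l)"
          using sum.reindex_bij_betw[OF h, of "\<lambda>l. A $ h i $ l * w $ l"] by simp
        also have "\<dots> = (A *v w) $ h i" by (simp add: matrix_vector_mult_def)
        also have "\<dots> = vec_index ((complex_of_real \<rho> * e) \<cdot>\<^sub>v v) i" using eq i' by (simp add: v_def)
        finally show "vec_index (Jm h A *\<^sub>v v) i = vec_index ((complex_of_real \<rho> * e) \<cdot>\<^sub>v v) i" .
      qed (simp add: Jm_def v_def)
      ultimately show ?thesis unfolding eigenvalue_def eigenvector_def using vc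
        by (auto simp: Jm_def)
    qed
    hence "norm (complex_of_real \<rho> * e) \<le> s"
      using spectral_radius_mem_max(2)[OF Jm_carrier N, of "norm (complex_of_real \<rho> * e)" h A]
      unfolding s_def spectrum_def by auto
    hence "\<rho> * norm e \<le> s" using \<rho> by (simp add: norm_mult)
    hence "\<rho> * norm e < \<rho> * 1" using \<rho> by linarith
    hence "norm e < 1" using \<rho>(1) mult_less_cancel_left_pos by blast
    thus ?thesis using se by simp
  qed
  from spectral_radius_jnf_norm_bound_less_1_upper_triangular[OF Jm_carrier this]
  obtain c where c: "\<And>k. norm_bound (Jm h A' ^\<^sub>m k) c" by auto
  have "norm (mpow A k $ i $ j) \<le> c * \<rho> ^ k" for k i j
  proof -
    obtain i' where i': "i' < CARD('n)" "h i' = i" using h unfolding bij_betw_def by (metis UNIV_I atLeastLessThan_iff imageE)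
    obtain j' where j': "j' < CARD('n)" "h j' = j" using h unfolding bij_betw_def by (metis UNIV_I atLeastLessThan_iff imageE)
    have "(Jm h A' ^\<^sub>m k) $$ (i',j') = Jm h (mpow A' k) $$ (i',j')"
      by (simp only: Jm_pow[OF h])
    also have "\<dots> = mpow A' k $ i $ j" using i' j' by (simp add: Jm_def)
    finally have "norm (mpow A' k $ i $ j) = norm ((Jm h A' ^\<^sub>m k) $$ (i',j'))" by simp
    also have "\<dots> \<le> c" using c[of k] i' j' unfolding norm_bound_def
      by (metis Jm_carrier carrier_matD pow_mat_dim_square)
    finally have "norm (mpow A' k $ i $ j) \<le> c" .
    moreover have "mpow A k $ i $ j = complex_of_real (\<rho>^k) * mpow A' k $ i $ j"
      by (subst A'A, simp only: csmat_pow, simp add: csmat_def)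
    moreover have "norm (complex_of_real (\<rho>^k)) = \<rho>^k" using \<rho> by (simp add: norm_power)
    ultimately have "norm (mpow A k $ i $ j) = \<rho>^k * norm (mpow A' k $ i $ j)"
      by (simp only: norm_mult)
    also have "\<dots> \<le> \<rho>^k * c"
      by (rule mult_left_mono[OF \<open>norm (mpow A' k $ i $ j) \<le> c\<close>]) (use \<rho> in simp)
    finally show ?thesis by (simp add: mult.commute)
  qed
  thus ?thesis using \<rho> by blast
qed


lemma rat_Hinf_decay:
  fixes \<Phi> :: "complex \<Rightarrow> complex^'m^'r"
  assumes "rat_Hinf \<Phi>"
  shows "\<exists>c \<sigma>. 0 < \<sigma> \<and> \<sigma> < 1 \<and> (\<forall>k i j. norm (taylor_coeff \<Phi> k $ i $ j) \<le> c * \<sigma> ^ k)"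
proof -
  obtain P :: "complex poly^'m^'r" and q where
    q1: "\<And>z. norm z \<le> 1 \<Longrightarrow> poly q z \<noteq> 0" and
    PQ: "\<And>z. poly q z \<noteq> 0 \<Longrightarrow> \<Phi> z = (\<chi> i j. poly (P $ i $ j) z / poly q z)"
    using assms unfolding rat_Hinf_def by blast
  have q0: "q \<noteq> 0" using q1[of 0] by auto
  define Z where "Z = {z. poly q z = 0}"
  have finZ: "finite Z" using poly_roots_finite[OF q0] by (simp add: Z_def)
  have Z1: "\<And>z. z \<in> Z \<Longrightarrow> norm z > 1" using q1 by (force simp: Z_def)
  define r where "r = (if Z = {} then 2 else min 2 (Min (norm ` Z)))"
  have r1: "r > 1" using Z1 finZ by (auto simp: r_def)
  have rZ: "r \<le> norm z" if "z \<in> Z" for z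
  proof -
    have "Min (norm ` Z) \<le> norm z" using finZ that by (intro Min_le) auto
    thus ?thesis using that by (auto simp: r_def)
  qed
  define r' where "r' = (1 + r) / 2"
  have r'1: "1 < r'" "r' < r" using r1 by (auto simp: r'_def)
  have nz: "\<And>z. norm z \<le> r' \<Longrightarrow> poly q z \<noteq> 0"
  proof -
    fix z :: complex assume "norm z \<le> r'"
    show "poly q z \<noteq> 0"
    proof
      assume "poly q z = 0"
      hence "z \<in> Z" by (simp add: Z_def)
      from rZ[OF this] \<open>norm z \<le> r'\<close> r'1 show False by simp
    qed
  qed
  have U: "open {z. poly q z \<noteq> 0}"
    by (rule open_Collect_neq) (auto intro: continuous_intros)
  have entry: "\<exists>B. 0 \<le> B \<and> (\<forall>k. norm (taylor_coeff \<Phi> k $ i $ j) \<le> B * (1/r') ^ k)" for i j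
  proof -
    define f where "f = (\<lambda>w. \<Phi> w $ i $ j)"
    have "(\<lambda>w. poly (P $ i $ j) w / poly q w) holomorphic_on {z. poly q z \<noteq> 0}"
      by (intro holomorphic_intros) auto
    hence hol: "f holomorphic_on {z. poly q z \<noteq> 0}"
      by (rule holomorphic_transform) (simp add: f_def PQ)
    have sub: "cball 0 r' \<subseteq> {z. poly q z \<noteq> 0}" using nz by auto
    have holb: "f holomorphic_on ball 0 r'"
      using hol by (rule holomorphic_on_subset) (use sub ball_subset_cball in blast)
    have contc: "continuous_on (cball 0 r') f"
      using holomorphic_on_imp_continuous_on[OF hol] sub by (rule continuous_on_subset)
    have "compact (f ` cball 0 r')" by (rule compact_continuous_image[OF contc compact_cball])
    then obtain B0 where B0: "\<And>x. x \<in> f ` cball 0 r' \<Longrightarrow> norm x \<le> B0"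
      using compact_imp_bounded bounded_iff by metis
    define B where "B = max B0 0"
    have Bs: "\<And>x. norm (0 - x) = r' \<Longrightarrow> norm (f x) \<le> B"
      using B0 unfolding B_def by (fastforce simp: norm_minus_commute)
    have "norm (taylor_coeff \<Phi> k $ i $ j) \<le> B * (1/r') ^ k" for k
    proof -
      have "norm ((deriv ^^ k) f 0) \<le> fact k * B / r' ^ k"
        by (rule Cauchy_inequality[OF holb contc]) (use r'1 Bs in auto)
      moreover have "taylor_coeff \<Phi> k $ i $ j = (deriv ^^ k) f 0 / fact k"
        by (simp add: taylor_coeff_def f_def)
      ultimately have "norm (taylor_coeff \<Phi> k $ i $ j) = norm ((deriv ^^ k) f 0) / fact k"
        by (simp add: norm_divide)
      also have "\<dots> \<le> (fact k * B / r' ^ k) / fact k"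
        by (rule divide_right_mono) (use \<open>norm ((deriv ^^ k) f 0) \<le> fact k * B / r' ^ k\<close> in auto)
      also have "\<dots> = B * (1/r') ^ k" by (simp add: power_one_over)
      finally show ?thesis .
    qed
    thus ?thesis by (intro exI[of _ B]) (auto simp: B_def)
  qed
  then obtain B where B: "\<And>i j. 0 \<le> B i j \<and> (\<forall>k. norm (taylor_coeff \<Phi> k $ i $ j) \<le> B i j * (1/r') ^ k)"
    by metis
  define c where "c = (\<Sum>i\<in>UNIV. \<Sum>j\<in>UNIV. B i j)"
  have Bc: "B i j \<le> c" for i j
  proof -
    have "B i j \<le> (\<Sum>j\<in>UNIV. B i j)" by (rule member_le_sum) (use B in auto)
    also have "\<dots> \<le> c" unfolding c_def by (rule member_le_sum) (use B in \<open>auto intro: sum_nonneg\<close>)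
    finally show ?thesis .
  qed
  have "norm (taylor_coeff \<Phi> k $ i $ j) \<le> c * (1/r') ^ k" for k i j
  proof -
    have "(0::real) \<le> (1/r') ^ k" using r'1 by simp
    hence "B i j * (1/r') ^ k \<le> c * (1/r') ^ k" using Bc[of i j] by (rule mult_right_mono[rotated])
    thus ?thesis using B[of i j] by (meson order_trans)
  qed
  thus ?thesis using r'1 by (intro exI[of _ c] exI[of _ "1/r'"]) auto
qed


lemma cinner_add_left: "cinner (x + y) z = cinner x z + cinner y z"
  by (simp add: cinner_def sum.distrib algebra_simps)
lemma cinner_diff_left: "cinner (x - y) z = cinner x z - cinner y z"
  by (simp add: cinner_def sum_subtractf algebra_simps)
lemma cinner_scale_left: "cinner (c *s x) z = c * cinner x z"
  by (simp add: cinner_def sum_distrib_left algebra_simps)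
lemma cinner_zero_left[simp]: "cinner 0 z = 0"
  by (simp add: cinner_def)
lemma cinner_zero_right[simp]: "cinner z 0 = 0"
  by (simp add: cinner_def)
lemma cinner_commute: "cinner y x = cnj (cinner x y)"
  by (simp add: cinner_def mult.commute)
lemma cinner_add_right: "cinner z (x + y) = cinner z x + cinner z y"
  by (simp add: cinner_def sum.distrib algebra_simps)
lemma cinner_diff_right: "cinner z (x - y) = cinner z x - cinner z y"
  by (simp add: cinner_def sum_subtractf algebra_simps)
lemma cinner_scale_right: "cinner z (c *s x) = cnj c * cinner z x"
  by (simp add: cinner_def sum_distrib_left algebra_simps)

lemma cinner_adj: "cinner (M *v x) y = cinner x (cadj M *v y)"
proof -
  have "cinner (M *v x) y = (\<Sum>i\<in>UNIV. \<Sum>j\<in>UNIV. M $ i $ j * x $ j * cnj (y $ i))"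
    by (simp add: cinner_def matrix_vector_mult_def sum_distrib_right)
  also have "\<dots> = (\<Sum>j\<in>UNIV. \<Sum>i\<in>UNIV. M $ i $ j * x $ j * cnj (y $ i))"
    by (rule sum.swap)
  also have "\<dots> = cinner x (cadj M *v y)"
    by (simp add: cinner_def matrix_vector_mult_def cadj_def sum_distrib_left mult_ac)
  finally show ?thesis .
qed

lemma cinner_self: "cinner x x = complex_of_real ((norm x)\<^sup>2)"
proof -
  have "(norm x)\<^sup>2 = (\<Sum>i\<in>UNIV. (norm (x $ i))\<^sup>2)"
    by (simp add: norm_vec_def L2_set_def sum_nonneg)
  hence "complex_of_real ((norm x)\<^sup>2) = (\<Sum>i\<in>UNIV. complex_of_real ((norm (x $ i))\<^sup>2))"
    by simp
  also have "\<dots> = cinner x x" by (simp only: cinner_def complex_norm_square)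
  finally show ?thesis by simp
qed

lemma cinner_self_Re: "Re (cinner x x) = (norm x)\<^sup>2"
  by (simp add: cinner_self)

lemma cinner_le: "norm (cinner x y) \<le> norm x * norm y"
proof -
  have "norm (cinner x y) \<le> (\<Sum>i\<in>UNIV. norm (x $ i * cnj (y $ i)))"
    unfolding cinner_def by (rule norm_sum)
  also have "\<dots> = (\<Sum>i\<in>UNIV. \<bar>norm (x $ i)\<bar> * \<bar>norm (y $ i)\<bar>)"
    by (simp add: norm_mult)
  also have "\<dots> \<le> L2_set (\<lambda>i. norm (x $ i)) UNIV * L2_set (\<lambda>i. norm (y $ i)) UNIV"
    by (rule L2_set_mult_ineq)
  finally show ?thesis by (simp add: norm_vec_def)
qed

lemma cinner_le2: "norm (cinner x y) \<le> ((norm x)\<^sup>2 + (norm y)\<^sup>2) / 2"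
proof -
  have "norm x * norm y \<le> ((norm x)\<^sup>2 + (norm y)\<^sup>2) / 2"
    using sum_squares_bound[of "norm x" "norm y"] by simp
  thus ?thesis using cinner_le[of x y] by linarith
qed

lemma norm_diff_sq: "(norm (a - b))\<^sup>2 = (norm a)\<^sup>2 + (norm b)\<^sup>2 - 2 * Re (cinner a b)"
proof -
  have "(norm (a - b))\<^sup>2 = Re (cinner (a - b) (a - b))" by (simp add: cinner_self_Re)
  also have "\<dots> = Re (cinner a a) + Re (cinner b b) - Re (cinner a b) - Re (cinner b a)"
    by (simp add: cinner_diff_left cinner_diff_right)
  also have "Re (cinner b a) = Re (cinner a b)" by (simp add: cinner_commute[of b a])
  finally show ?thesis by (simp add: cinner_self_Re)
qed

lemma cinner_self_eq_0: "cinner x x = 0 \<longleftrightarrow> x = 0"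
  by (simp add: cinner_self)

lemma mat_bound: "\<exists>B\<ge>0. \<forall>v. norm ((M::complex^'a::finite^'b::finite) *v v) \<le> B * norm v"
  using bounded_linear.nonneg_bounded[OF matrix_vector_mul_bounded_linear[of M]]
  by (auto simp: mult.commute)

lemma norm_axis_c: "norm (axis j (1::complex)) = 1"
proof -
  have "(\<Sum>i\<in>UNIV. (norm (axis j (1::complex) $ i))\<^sup>2) = 1"
  proof -
    have "(\<Sum>i\<in>UNIV. (norm (axis j (1::complex) $ i))\<^sup>2) = (\<Sum>i\<in>UNIV. if i = j then 1 else (0::real))"
      by (rule sum.cong) (auto simp: axis_def)
    also have "\<dots> = 1" by (simp add: sum.delta)
    finally show ?thesis .
  qed
  thus ?thesis by (simp add: norm_vec_def L2_set_def)
qed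

lemma entry_bound:
  assumes "\<And>v. norm ((M::complex^'a::finite^'b::finite) *v v) \<le> B * norm v"
  shows "norm (M $ i $ j) \<le> B"
proof -
  have "(M *v axis j 1) $ i = M $ i $ j"
    by (simp add: matrix_vector_mult_def axis_def if_distrib cong: if_cong)
  moreover have "norm ((M *v axis j 1) $ i) \<le> norm (M *v axis j 1)" by (rule Finite_Cartesian_Product.norm_nth_le)
  ultimately have "norm (M $ i $ j) \<le> norm (M *v axis j 1)" by simp
  also have "\<dots> \<le> B * norm (axis j (1::complex))" by (rule assms)
  finally show ?thesis by (simp add: norm_axis_c)
qed

lemma mv_bound_entries:
  assumes "\<And>i j. norm ((M::complex^'a::finite^'b::finite) $ i $ j) \<le> b"
  shows "norm (M *v v) \<le> (real CARD('b) * (real CARD('a) * b)) * norm v"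
proof -
  have comp: "norm ((M *v v) $ i) \<le> real CARD('a) * b * norm v" for i
  proof -
    have "norm ((M *v v) $ i) \<le> (\<Sum>j\<in>UNIV. norm (M $ i $ j * v $ j))"
      unfolding matrix_vector_mult_def by (simp add: norm_sum)
    also have "\<dots> \<le> (\<Sum>j\<in>(UNIV::'a set). b * norm v)"
    proof (rule sum_mono)
      fix j
      have "norm (M $ i $ j * v $ j) = norm (M $ i $ j) * norm (v $ j)" by (simp add: norm_mult)
      also have "\<dots> \<le> b * norm v"
        using assms[of i j] Finite_Cartesian_Product.norm_nth_le[where x=v and i=j] by (intro mult_mono) (auto intro: order_trans[OF norm_ge_zero])
      finally show "norm (M $ i $ j * v $ j) \<le> b * norm v" .
    qed
    finally show ?thesis by simp
  qed
  have "norm (M *v v) \<le> (\<Sum>i\<in>UNIV. norm ((M *v v) $ i))"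
    unfolding norm_vec_def by (rule L2_set_le_sum) simp
  also have "\<dots> \<le> (\<Sum>i\<in>(UNIV::'b set). real CARD('a) * b * norm v)"
    by (rule sum_mono) (rule comp)
  finally show ?thesis by (simp add: mult_ac)
qed

lemma mat_norm_bound:
  assumes "\<And>i j. norm ((M::complex^'a::finite^'b::finite) $ i $ j) \<le> b"
  shows "norm M \<le> real CARD('b) * (real CARD('a) * b)"
proof -
  have r: "norm (M $ i) \<le> real CARD('a) * b" for i
  proof -
    have "norm (M $ i) \<le> (\<Sum>j\<in>UNIV. norm (M $ i $ j))"
      unfolding norm_vec_def by (rule L2_set_le_sum) simp
    also have "\<dots> \<le> (\<Sum>j\<in>(UNIV::'a set). b)" by (rule sum_mono) (rule assms)
    finally show ?thesis by simp
  qed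
  have "norm M \<le> (\<Sum>i\<in>UNIV. norm (M $ i))"
    unfolding norm_vec_def by (rule L2_set_le_sum) simp
  also have "\<dots> \<le> (\<Sum>i\<in>(UNIV::'b set). real CARD('a) * b)" by (rule sum_mono) (rule r)
  finally show ?thesis by simp
qed

lemma cadj_entry: "cadj M $ i $ j = cnj (M $ j $ i)"
  by (simp add: cadj_def)

lemma sums_cinner_left:
  assumes "t sums s"
  shows "(\<lambda>k. cinner (t k) z) sums cinner s z"
proof -
  have "(\<lambda>k. \<Sum>i\<in>UNIV. t k $ i * cnj (z $ i)) sums (\<Sum>i\<in>UNIV. s $ i * cnj (z $ i))"
    by (rule sums_sum, rule sums_mult2, rule sums_vec_nth[OF assms])
  thus ?thesis by (simp add: cinner_def)
qed

lemma sums_cinner_right: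
  assumes "t sums s"
  shows "(\<lambda>k. cinner z (t k)) sums cinner z s"
proof -
  have "(\<lambda>k. cnj (cinner (t k) z)) sums cnj (cinner s z)"
    using sums_cinner_left[OF assms] by (simp only: sums_cnj)
  thus ?thesis by (simp add: cinner_commute[of z])
qed

lemma sums_cinner_mat:
  assumes "Mk sums Q"
  shows "(\<lambda>k. cinner (Mk k *v x) z) sums cinner (Q *v x) z"
proof -
  have e: "(\<lambda>k. Mk k $ i $ j) sums Q $ i $ j" for i j
    by (rule sums_vec_nth, rule sums_vec_nth, rule assms)
  have "(\<lambda>k. \<Sum>i\<in>UNIV. \<Sum>j\<in>UNIV. Mk k $ i $ j * x $ j * cnj (z $ i))
        sums (\<Sum>i\<in>UNIV. \<Sum>j\<in>UNIV. Q $ i $ j * x $ j * cnj (z $ i))"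
    by (intro sums_sum sums_mult2 e)
  thus ?thesis by (simp add: cinner_def matrix_vector_mult_def sum_distrib_right)
qed

lemma l2_iff: "f \<in> l2 \<longleftrightarrow> summable (\<lambda>j. (norm (f j))\<^sup>2)"
  by (simp add: l2_def)

lemma l2_zero: "(\<lambda>_. 0) \<in> l2"
  by (simp add: l2_def)

lemma l2_add: assumes "f \<in> l2" "g \<in> l2" shows "(\<lambda>j. f j + g j) \<in> l2"
proof -
  have "summable (\<lambda>j. 2 * (norm (f j))\<^sup>2 + 2 * (norm (g j))\<^sup>2)"
    using assms by (intro summable_add summable_mult) (auto simp: l2_def)
  moreover have "norm ((norm (f j + g j))\<^sup>2) \<le> 2 * (norm (f j))\<^sup>2 + 2 * (norm (g j))\<^sup>2" for j
  proof -
    have "norm (f j + g j) \<le> norm (f j) + norm (g j)" by (rule norm_triangle_ineq)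
    hence "(norm (f j + g j))\<^sup>2 \<le> (norm (f j) + norm (g j))\<^sup>2" by (simp add: power_mono)
    also have "\<dots> \<le> 2 * (norm (f j))\<^sup>2 + 2 * (norm (g j))\<^sup>2"
    proof -
      have e: "(norm (f j) + norm (g j))\<^sup>2 = (norm (f j))\<^sup>2 + (norm (g j))\<^sup>2 + 2 * norm (f j) * norm (g j)"
        by (rule power2_sum)
      have "2 * norm (f j) * norm (g j) \<le> (norm (f j))\<^sup>2 + (norm (g j))\<^sup>2"
        by (rule sum_squares_bound)
      thus ?thesis using e by linarith
    qed
    finally show ?thesis by simp
  qed
  ultimately show ?thesis unfolding l2_def
    by (auto intro: summable_comparison_test[where g="\<lambda>j. 2 * (norm (f j))\<^sup>2 + 2 * (norm (g j))\<^sup>2"])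
qed

lemma l2_scale: assumes "f \<in> l2" shows "(\<lambda>j. c *s f j) \<in> l2"
proof -
  have n: "norm (c *s v) = norm c * norm v" for v :: "complex^'k"
  proof -
    have "norm (c *s v) = L2_set (\<lambda>i. norm c * norm (v $ i)) UNIV"
      by (simp add: norm_vec_def norm_mult)
    also have "\<dots> = norm c * norm v" unfolding norm_vec_def
      by (rule L2_set_right_distrib[symmetric]) simp
    finally show ?thesis .
  qed
  have "summable (\<lambda>j. (norm c)\<^sup>2 * (norm (f j))\<^sup>2)" using assms by (intro summable_mult) (simp add: l2_def)
  thus ?thesis by (simp add: l2_def n power_mult_distrib)
qed

lemma l2_neg: assumes "f \<in> l2" shows "(\<lambda>j. - f j) \<in> l2"
  using assms by (simp add: l2_def)

lemma l2_diff: assumes "f \<in> l2" "g \<in> l2" shows "(\<lambda>j. f j - g j) \<in> l2"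
  using l2_add[OF assms(1) l2_neg[OF assms(2)]] by simp

lemma l2_bounded: assumes "f \<in> l2" shows "\<exists>B\<ge>0. \<forall>j. norm (f j) \<le> B"
proof -
  have s: "summable (\<lambda>j. (norm (f j))\<^sup>2)" using assms by (simp add: l2_def)
  have "(norm (f j))\<^sup>2 \<le> (\<Sum>j. (norm (f j))\<^sup>2)" for j
    using sum_le_suminf[OF s, of "{j}"] by simp
  hence "norm (f j) \<le> sqrt (\<Sum>j. (norm (f j))\<^sup>2)" for j
    by (metis norm_ge_zero real_le_rsqrt)
  moreover have "0 \<le> sqrt (\<Sum>j. (norm (f j))\<^sup>2)" using suminf_nonneg[OF s] by simp
  ultimately show ?thesis by blast
qed

lemma l2inner_summable: assumes "f \<in> l2" "g \<in> l2"
  shows "summable (\<lambda>j. cinner (f j) (g j))"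
proof (rule summable_comparison_test)
  show "\<exists>N. \<forall>n\<ge>N. norm (cinner (f n) (g n)) \<le> ((norm (f n))\<^sup>2 + (norm (g n))\<^sup>2) / 2"
    using cinner_le2 by blast
  show "summable (\<lambda>n. ((norm (f n))\<^sup>2 + (norm (g n))\<^sup>2) / 2)"
    using assms by (intro summable_divide summable_add) (auto simp: l2_def)
qed

lemma l2inner_diff_left: assumes "f \<in> l2" "g \<in> l2" "h \<in> l2"
  shows "l2inner (\<lambda>j. f j - g j) h = l2inner f h - l2inner g h"
  unfolding l2inner_def cinner_diff_left
  by (rule suminf_diff[OF l2inner_summable[OF assms(1,3)] l2inner_summable[OF assms(2,3)], symmetric])

lemma l2inner_self: assumes "f \<in> l2" shows "l2inner f f = complex_of_real (\<Sum>j. (norm (f j))\<^sup>2)"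
proof -
  have "(\<lambda>j. complex_of_real ((norm (f j))\<^sup>2)) sums complex_of_real (\<Sum>j. (norm (f j))\<^sup>2)"
    using assms by (intro sums_of_real summable_sums) (simp add: l2_def)
  thus ?thesis unfolding l2inner_def cinner_self by (simp add: sums_iff)
qed

lemma l2inner_self_zero: assumes "f \<in> l2" "l2inner f f = 0" shows "f = (\<lambda>_. 0)"
proof -
  have s: "summable (\<lambda>j. (norm (f j))\<^sup>2)" using assms by (simp add: l2_def)
  have "complex_of_real (\<Sum>j. (norm (f j))\<^sup>2) = 0" using assms(2) l2inner_self[OF assms(1)] by simp
  hence "(\<Sum>j. (norm (f j))\<^sup>2) = 0" by (simp only: of_real_eq_0_iff)
  hence "\<forall>j. (norm (f j))\<^sup>2 = 0" using suminf_eq_zero_iff[OF s] by simp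
  thus ?thesis by auto
qed


lemma summable_on_suminf:
  fixes f :: "nat \<Rightarrow> 'a::banach"
  assumes "f summable_on UNIV"
  shows "suminf f = infsum f UNIV"
  using has_sum_imp_sums[OF has_sum_infsum[OF assms]] by (simp add: sums_iff)

lemma tri_sum:
  fixes b :: "nat \<times> nat \<Rightarrow> 'a::banach"
  assumes "b summable_on UNIV"
  shows "(\<lambda>i. \<Sum>j\<le>i. b (j, i - j)) summable_on UNIV"
    and "infsum (\<lambda>i. \<Sum>j\<le>i. b (j, i - j)) UNIV = infsum b UNIV"
proof -
  define S where "S = Sigma (UNIV::nat set) (\<lambda>i. {..i})"
  define g where "g = (\<lambda>(i::nat, j::nat). (j, i - j))"
  have bij: "bij_betw g S UNIV"
    by (rule bij_betw_byWitness[where f'="\<lambda>(j, k). (j + k, j)"]) (auto simp: S_def g_def image_def)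
  have "(\<lambda>x. b (g x)) summable_on S"
    using assms summable_on_reindex_bij_betw[OF bij] by blast
  hence s: "(\<lambda>(i, j). b (j, i - j)) summable_on Sigma UNIV (\<lambda>i. {..i})"
    unfolding S_def g_def by (simp add: case_prod_unfold)
  from summable_on_Sigma_banach[OF s]
  show "(\<lambda>i. \<Sum>j\<le>i. b (j, i - j)) summable_on UNIV" by simp
  have "infsum (\<lambda>i. \<Sum>j\<le>i. b (j, i - j)) UNIV = (\<Sum>\<^sub>\<infinity>(i, j)\<in>Sigma UNIV (\<lambda>i. {..i}). b (j, i - j))"
    using infsum_Sigma'_banach[OF s] by simp
  also have "\<dots> = (\<Sum>\<^sub>\<infinity>x\<in>S. b (g x))" unfolding S_def g_def by (simp add: case_prod_unfold)
  also have "\<dots> = infsum b UNIV" by (rule infsum_reindex_bij_betw[OF bij])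
  finally show "infsum (\<lambda>i. \<Sum>j\<le>i. b (j, i - j)) UNIV = infsum b UNIV" .
qed

lemma rows_sum:
  fixes b :: "nat \<times> nat \<Rightarrow> complex"
  assumes "b summable_on UNIV"
  shows "(\<lambda>k. b (j, k)) summable_on UNIV"
    and "(\<lambda>j. infsum (\<lambda>k. b (j, k)) UNIV) summable_on UNIV"
    and "infsum (\<lambda>j. infsum (\<lambda>k. b (j, k)) UNIV) UNIV = infsum b UNIV"
proof -
  have s: "(\<lambda>(x, y). b (x, y)) summable_on Sigma UNIV (\<lambda>_. UNIV)"
    using assms by (simp add: case_prod_unfold)
  show "(\<lambda>k. b (j, k)) summable_on UNIV" using summable_on_SigmaD1[where f="\<lambda>x y. b (x, y)", OF s, of j] by simp
  show "(\<lambda>j. infsum (\<lambda>k. b (j, k)) UNIV) summable_on UNIV" using summable_on_Sigma_banach[where f="\<lambda>x y. b (x, y)", OF s] by simp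
  show "infsum (\<lambda>j. infsum (\<lambda>k. b (j, k)) UNIV) UNIV = infsum b UNIV"
    using infsum_Sigma'_banach[where f="\<lambda>x y. b (x, y)", OF s] by (simp add: case_prod_unfold)
qed

lemma bdd_summable:
  fixes d :: "nat \<times> nat \<Rightarrow> real"
  assumes nn: "\<And>x. 0 \<le> d x" and bd: "\<And>N. (\<Sum>j\<le>N. \<Sum>k\<le>N. d (j, k)) \<le> C"
  shows "d summable_on UNIV"
proof (rule nonneg_bdd_above_summable_on)
  show "0 \<le> d x" for x by (rule nn)
  show "bdd_above (sum d ` {F. F \<subseteq> UNIV \<and> finite F})"
  proof (rule bdd_aboveI)
    fix s assume "s \<in> sum d ` {F. F \<subseteq> UNIV \<and> finite F}"
    then obtain F where F: "finite F" "s = sum d F" by auto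
    define N where "N = Max (insert 0 (fst ` F \<union> snd ` F))"
    have "F \<subseteq> {..N} \<times> {..N}"
    proof
      fix x assume "x \<in> F"
      hence "fst x \<le> N" "snd x \<le> N" using F(1) unfolding N_def by (auto intro!: Max_ge)
      thus "x \<in> {..N} \<times> {..N}" by (cases x) auto
    qed
    hence "sum d F \<le> sum d ({..N} \<times> {..N})" by (intro sum_mono2) (auto simp: nn)
    also have "\<dots> = (\<Sum>j\<le>N. \<Sum>k\<le>N. d (j, k))" by (simp add: sum.cartesian_product)
    also have "\<dots> \<le> C" by (rule bd)
    finally show "s \<le> C" using F by simp
  qed
qed


lemma cadj_cadj[simp]: "cadj (cadj M) = M"
  by (simp add: cadj_def vec_eq_iff)

lemma cinner_adj': "cinner (cadj M *v x) y = cinner x (M *v y)"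
  using cinner_adj[of "cadj M" x y] by simp

lemma geom_sq_summable: fixes r c :: real assumes "0 < r" "r < 1"
  shows "summable (\<lambda>k. c * (r\<^sup>2) ^ k)"
proof -
  have "r * r < 1 * 1" using assms mult_strict_mono[of r 1 r 1] by simp
  hence "norm (r\<^sup>2) < 1" using assms by (simp add: power2_eq_square)
  thus ?thesis by (intro summable_mult summable_geometric)
qed

locale dec =
  fixes A :: "complex^'n^'n" and Cp :: "complex^'n^'r" and \<Phi> :: "complex \<Rightarrow> complex^'m^'r"
    and K \<rho> L \<sigma> :: real
  assumes rho: "0 < \<rho>" "\<rho> < 1" and sig: "0 < \<sigma>" "\<sigma> < 1" and KL: "0 \<le> K" "0 \<le> L"
    and Vb: "\<And>k v. norm (Cp *v (mpow A k *v v)) \<le> K * \<rho>^k * norm v"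
    and Vab: "\<And>k v. norm (cadj (mpow A k) *v (cadj Cp *v v)) \<le> K * \<rho>^k * norm v"
    and Tb: "\<And>k v. norm (taylor_coeff \<Phi> k *v v) \<le> L * \<sigma>^k * norm v"
    and Tab: "\<And>k v. norm (cadj (taylor_coeff \<Phi> k) *v v) \<le> L * \<sigma>^k * norm v"
begin

lemma V_l2: "Wobs Cp A x \<in> l2"
proof -
  have sm: "summable (\<lambda>k. (K * norm x)\<^sup>2 * (\<rho>\<^sup>2) ^ k)" by (rule geom_sq_summable[OF rho])
  have cmp: "norm ((norm (Wobs Cp A x k))\<^sup>2) \<le> (K * norm x)\<^sup>2 * (\<rho>\<^sup>2) ^ k" for k
  proof -
    have "norm (Wobs Cp A x k) \<le> K * \<rho>^k * norm x" unfolding Wobs_def by (rule Vb)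
    hence "(norm (Wobs Cp A x k))\<^sup>2 \<le> (K * \<rho>^k * norm x)\<^sup>2" by (simp add: power_mono)
    also have "\<dots> = (K * norm x)\<^sup>2 * (\<rho>\<^sup>2) ^ k" by (simp add: power_mult_distrib power_mult[symmetric] mult.commute)
    finally show ?thesis by simp
  qed
  show ?thesis unfolding l2_def mem_Collect_eq
  proof (rule summable_comparison_test)
    show "\<exists>N. \<forall>n\<ge>N. norm ((norm (Wobs Cp A x n))\<^sup>2) \<le> (K * norm x)\<^sup>2 * (\<rho>\<^sup>2) ^ n"
      using cmp by blast
  qed (rule sm)
qed

lemma Vadj_summable: assumes "f \<in> l2"
  shows "summable (\<lambda>j. cadj (mpow A j) *v (cadj Cp *v f j))"
proof -
  obtain B where B: "B \<ge> 0" "\<And>j. norm (f j) \<le> B" using l2_bounded[OF assms] by blast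
  show ?thesis
  proof (rule summable_comparison_test)
    show "\<exists>N. \<forall>n\<ge>N. norm (cadj (mpow A n) *v (cadj Cp *v f n)) \<le> (K * B) * \<rho> ^ n"
    proof (intro exI allI impI)
      fix n
      have "norm (cadj (mpow A n) *v (cadj Cp *v f n)) \<le> K * \<rho>^n * norm (f n)" by (rule Vab)
      also have "\<dots> \<le> K * \<rho>^n * B" using B KL rho by (intro mult_left_mono) auto
      finally show "norm (cadj (mpow A n) *v (cadj Cp *v f n)) \<le> (K * B) * \<rho> ^ n" by (simp add: mult_ac)
    qed
    show "summable (\<lambda>n. (K * B) * \<rho> ^ n)" using rho by (intro summable_mult summable_geometric) auto
  qed
qed

lemma Vadj_inner: assumes "f \<in> l2"
  shows "cinner (Wobs_adj Cp A f) z = l2inner f (Wobs Cp A z)"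
proof -
  have "(\<lambda>j. cadj (mpow A j) *v (cadj Cp *v f j)) sums Wobs_adj Cp A f"
    unfolding Wobs_adj_def by (rule summable_sums[OF Vadj_summable[OF assms]])
  from sums_cinner_left[OF this, of z]
  have "(\<lambda>j. cinner (f j) (Wobs Cp A z j)) sums cinner (Wobs_adj Cp A f) z"
    by (simp add: cinner_adj' Wobs_def)
  thus ?thesis by (simp add: l2inner_def sums_iff)
qed

definition Mk :: "nat \<Rightarrow> complex^'n^'n" where
  "Mk k = cadj (mpow A k) ** cadj Cp ** Cp ** mpow A k"

lemma Mk_v: "Mk k *v x = cadj (mpow A k) *v (cadj Cp *v (Cp *v (mpow A k *v x)))"
  by (simp add: Mk_def matrix_vector_mul_assoc[symmetric])

lemma Mk_summable: "summable Mk"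
proof (rule summable_comparison_test)
  have b: "norm (Mk k *v v) \<le> (K * K * (\<rho>\<^sup>2) ^ k) * norm v" for k v
  proof -
    have "norm (Mk k *v v) \<le> K * \<rho>^k * norm (Cp *v (mpow A k *v v))" unfolding Mk_v by (rule Vab)
    also have "\<dots> \<le> K * \<rho>^k * (K * \<rho>^k * norm v)" using KL rho by (intro mult_left_mono Vb) auto
    finally show ?thesis by (simp add: power_mult[symmetric] power2_eq_square mult_ac power_mult_distrib)
  qed
  show "\<exists>N. \<forall>n\<ge>N. norm (Mk n) \<le> real CARD('n) * (real CARD('n) * (K * K * (\<rho>\<^sup>2) ^ n))"
    by (intro exI allI impI mat_norm_bound entry_bound b)
  show "summable (\<lambda>n. real CARD('n) * (real CARD('n) * (K * K * (\<rho>\<^sup>2) ^ n)))"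
    using summable_mult[OF geom_sq_summable[OF rho, of "K*K"], of "real CARD('n) * real CARD('n)"]
    by (simp add: mult_ac)
qed

lemma Q_inner: "l2inner (Wobs Cp A x) (Wobs Cp A z) = cinner (obs_gramian Cp A *v x) z"
proof -
  have "obs_gramian Cp A = suminf Mk" by (simp add: obs_gramian_def Mk_def[abs_def])
  hence "Mk sums obs_gramian Cp A" using summable_sums[OF Mk_summable] by simp
  from sums_cinner_mat[OF this, of x z]
  have "(\<lambda>k. cinner (Wobs Cp A x k) (Wobs Cp A z k)) sums cinner (obs_gramian Cp A *v x) z"
    by (simp add: Mk_v cinner_adj' Wobs_def)
  thus ?thesis by (simp add: l2inner_def sums_iff)
qed

end


lemma norm_vsm: "norm (c *s (v::complex^'k)) = norm c * norm v"
proof -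
  have "norm (c *s v) = L2_set (\<lambda>i. norm c * norm (v $ i)) UNIV"
    by (simp add: norm_vec_def norm_mult)
  also have "\<dots> = norm c * norm v" unfolding norm_vec_def
    by (rule L2_set_right_distrib[symmetric]) simp
  finally show ?thesis .
qed

lemma bl_vsm: "bounded_linear (\<lambda>v::complex^'k. c *s v)"
  by (rule bounded_linear_intro[where K="norm c"])
    (auto simp: Finite_Cartesian_Product.vec_eq_iff algebra_simps norm_vsm scaleR_conv_of_real)

lemma suminf_vsm: assumes "summable (t :: nat \<Rightarrow> complex^'k)"
  shows "(\<Sum>k. c *s t k) = c *s suminf t"
  using bounded_linear.suminf[OF bl_vsm assms] by simp

lemma cinner_sum_left: "cinner (sum h S) z = (\<Sum>s\<in>S. cinner (h s) z)"
proof (cases "finite S")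
  case True thus ?thesis
    by (induction S rule: finite_induct) (auto simp: cinner_add_left)
qed simp

context dec
begin

lemma Tadj_summable: assumes "g \<in> l2"
  shows "summable (\<lambda>k. cadj (taylor_coeff \<Phi> k) *v g (i + k))"
proof -
  obtain B where B: "B \<ge> 0" "\<And>j. norm (g j) \<le> B" using l2_bounded[OF assms] by blast
  show ?thesis
  proof (rule summable_comparison_test)
    show "\<exists>N. \<forall>n\<ge>N. norm (cadj (taylor_coeff \<Phi> n) *v g (i + n)) \<le> (L * B) * \<sigma> ^ n"
    proof (intro exI allI impI)
      fix n
      have "norm (cadj (taylor_coeff \<Phi> n) *v g (i + n)) \<le> L * \<sigma>^n * norm (g (i + n))" by (rule Tab)
      also have "\<dots> \<le> L * \<sigma>^n * B" using B KL sig by (intro mult_left_mono) auto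
      finally show "norm (cadj (taylor_coeff \<Phi> n) *v g (i + n)) \<le> (L * B) * \<sigma> ^ n" by (simp add: mult_ac)
    qed
    show "summable (\<lambda>n. (L * B) * \<sigma> ^ n)" using sig by (intro summable_mult summable_geometric) auto
  qed
qed

lemma Tadj_diff: assumes "f \<in> l2" "g \<in> l2"
  shows "toeplitz_adj \<Phi> (\<lambda>j. f j - g j) = (\<lambda>i. toeplitz_adj \<Phi> f i - toeplitz_adj \<Phi> g i)"
  unfolding toeplitz_adj_def
  by (rule ext, simp add: matrix_vector_mult_diff_distrib suminf_diff[OF Tadj_summable[OF assms(1)] Tadj_summable[OF assms(2)]])

lemma Tadj_add: assumes "f \<in> l2" "g \<in> l2"
  shows "toeplitz_adj \<Phi> (\<lambda>j. f j + g j) = (\<lambda>i. toeplitz_adj \<Phi> f i + toeplitz_adj \<Phi> g i)"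
  unfolding toeplitz_adj_def
  by (rule ext, simp add: matrix_vector_right_distrib suminf_add[OF Tadj_summable[OF assms(1)] Tadj_summable[OF assms(2)]])

lemma Tadj_zero: "toeplitz_adj \<Phi> (\<lambda>_. 0) = (\<lambda>_. 0)"
  unfolding toeplitz_adj_def by simp

lemma Tadj_scale: assumes "g \<in> l2"
  shows "toeplitz_adj \<Phi> (\<lambda>j. c *s g j) = (\<lambda>i. c *s toeplitz_adj \<Phi> g i)"
  unfolding toeplitz_adj_def
  by (rule ext, simp add: vector_scalar_commute suminf_vsm[OF Tadj_summable[OF assms]])

end


lemma geom_partial: fixes s :: real assumes "0 < s" "s < 1"
  shows "(\<Sum>j\<le>i. s ^ (i - j)) \<le> 1 / (1 - s)"
proof -
  have "(\<Sum>j\<le>i. s ^ (i - j)) = (\<Sum>j<Suc i. s ^ (Suc i - Suc j))"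
    by (simp add: lessThan_Suc_atMost)
  also have "\<dots> = (\<Sum>j<Suc i. s ^ j)" by (rule sum.nat_diff_reindex)
  also have "\<dots> \<le> (\<Sum>j. s ^ j)"
    using assms by (intro sum_le_suminf summable_geometric) auto
  also have "\<dots> = 1 / (1 - s)" using assms by (simp add: suminf_geometric)
  finally show ?thesis .
qed

lemma geom_partial': fixes s :: real assumes "0 < s" "s < 1"
  shows "(\<Sum>k\<le>N. s ^ k) \<le> 1 / (1 - s)"
proof -
  have "(\<Sum>k\<le>N. s ^ k) \<le> (\<Sum>j. s ^ j)"
    using assms by (intro sum_le_suminf summable_geometric) auto
  also have "\<dots> = 1 / (1 - s)" using assms by (simp add: suminf_geometric)
  finally show ?thesis .
qed

lemma l2_partial: assumes "f \<in> l2" "finite I" shows "(\<Sum>j\<in>I. (norm (f j))\<^sup>2) \<le> (\<Sum>j. (norm (f j))\<^sup>2)"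
  using assms by (intro sum_le_suminf) (auto simp: l2_def)

lemma l2_shift_partial: assumes "f \<in> l2"
  shows "(\<Sum>j\<le>N. (norm (f (j + k)))\<^sup>2) \<le> (\<Sum>j. (norm (f j))\<^sup>2)"
proof -
  have "(\<Sum>j\<le>N. (norm (f (j + k)))\<^sup>2) = (\<Sum>j\<in>(\<lambda>j. j + k) ` {..N}. (norm (f j))\<^sup>2)"
    by (subst sum.reindex) (auto simp: inj_on_def)
  also have "\<dots> \<le> (\<Sum>j. (norm (f j))\<^sup>2)" by (rule l2_partial[OF assms]) auto
  finally show ?thesis .
qed

context dec
begin

lemma T_l2: assumes "f \<in> l2" shows "toeplitz \<Phi> f \<in> l2"
proof -
  define a where "a j = norm (f j)" for j
  define F where "F = (\<Sum>j. (a j)\<^sup>2)"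
  define e where "e = (\<lambda>(j::nat, k::nat). \<sigma> ^ k * (a j)\<^sup>2)"
  have Fp: "(\<Sum>j\<in>I. (a j)\<^sup>2) \<le> F" if "finite I" for I
    unfolding F_def a_def using l2_partial[OF assms that] .
  have F0: "0 \<le> F" using Fp[of "{}"] by simp
  have es: "e summable_on UNIV"
  proof (rule bdd_summable[where C="F * (1 / (1 - \<sigma>))"])
    show "0 \<le> e x" for x using sig by (cases x) (auto simp: e_def)
    fix N
    have "(\<Sum>j\<le>N. \<Sum>k\<le>N. e (j, k)) = (\<Sum>j\<le>N. (a j)\<^sup>2) * (\<Sum>k\<le>N. \<sigma> ^ k)"
      by (simp add: e_def sum_distrib_left sum_distrib_right mult_ac)
    also have "\<dots> \<le> F * (1 / (1 - \<sigma>))"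
      using sig by (intro mult_mono Fp geom_partial' sig) (auto intro: sum_nonneg simp: F0)
    finally show "(\<Sum>j\<le>N. \<Sum>k\<le>N. e (j, k)) \<le> F * (1 / (1 - \<sigma>))" .
  qed
  have ts: "summable (\<lambda>i. \<Sum>j\<le>i. e (j, i - j))"
    by (rule summable_on_imp_summable[OF tri_sum(1)[OF es]])
  have pt: "(norm (toeplitz \<Phi> f i))\<^sup>2 \<le> (L\<^sup>2 * (1 / (1 - \<sigma>))) * (\<Sum>j\<le>i. e (j, i - j))" for i
  proof -
    define S where "S = (\<Sum>j\<le>i. \<sigma> ^ (i - j) * a j)"
    have "norm (toeplitz \<Phi> f i) \<le> (\<Sum>j\<le>i. norm (taylor_coeff \<Phi> (i - j) *v f j))"
      unfolding toeplitz_def by (rule norm_sum)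
    also have "\<dots> \<le> (\<Sum>j\<le>i. L * (\<sigma> ^ (i - j) * a j))"
      by (rule sum_mono) (use Tb in \<open>simp add: a_def mult_ac\<close>)
    also have "\<dots> = L * S" by (simp add: S_def sum_distrib_left)
    finally have n1: "norm (toeplitz \<Phi> f i) \<le> L * S" .
    have S2: "S\<^sup>2 \<le> (\<Sum>j\<le>i. \<sigma> ^ (i - j)) * (\<Sum>j\<le>i. \<sigma> ^ (i - j) * (a j)\<^sup>2)"
    proof -
      have "S = (\<Sum>j\<le>i. sqrt (\<sigma> ^ (i - j)) * (sqrt (\<sigma> ^ (i - j)) * a j))"
        unfolding S_def using sig by (intro sum.cong) (auto simp: mult.assoc[symmetric])
      hence "S\<^sup>2 \<le> (\<Sum>j\<le>i. (sqrt (\<sigma> ^ (i - j)))\<^sup>2) * (\<Sum>j\<le>i. (sqrt (\<sigma> ^ (i - j)) * a j)\<^sup>2)"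
        using Cauchy_Schwarz_ineq_sum by metis
      also have "\<dots> = (\<Sum>j\<le>i. \<sigma> ^ (i - j)) * (\<Sum>j\<le>i. \<sigma> ^ (i - j) * (a j)\<^sup>2)"
        using sig by (simp add: power_mult_distrib)
      finally show ?thesis .
    qed
    have S0: "0 \<le> S" using sig by (auto simp: S_def a_def intro: sum_nonneg)
    have "(norm (toeplitz \<Phi> f i))\<^sup>2 \<le> (L * S)\<^sup>2"
      using n1 by (simp add: power_mono)
    also have "\<dots> = L\<^sup>2 * S\<^sup>2" by (simp add: power_mult_distrib)
    also have "\<dots> \<le> L\<^sup>2 * ((1 / (1 - \<sigma>)) * (\<Sum>j\<le>i. \<sigma> ^ (i - j) * (a j)\<^sup>2))"
    proof (rule mult_left_mono)
      have "(\<Sum>j\<le>i. \<sigma> ^ (i - j)) * (\<Sum>j\<le>i. \<sigma> ^ (i - j) * (a j)\<^sup>2)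
            \<le> (1 / (1 - \<sigma>)) * (\<Sum>j\<le>i. \<sigma> ^ (i - j) * (a j)\<^sup>2)"
        using sig by (intro mult_right_mono geom_partial) (auto intro: sum_nonneg)
      thus "S\<^sup>2 \<le> (1 / (1 - \<sigma>)) * (\<Sum>j\<le>i. \<sigma> ^ (i - j) * (a j)\<^sup>2)" using S2 by linarith
    qed simp
    also have "\<dots> = (L\<^sup>2 * (1 / (1 - \<sigma>))) * (\<Sum>j\<le>i. e (j, i - j))"
      by (simp add: e_def)
    finally show ?thesis .
  qed
  show ?thesis unfolding l2_def mem_Collect_eq
  proof (rule summable_comparison_test)
    show "\<exists>N. \<forall>n\<ge>N. norm ((norm (toeplitz \<Phi> f n))\<^sup>2) \<le> (L\<^sup>2 * (1 / (1 - \<sigma>))) * (\<Sum>j\<le>n. e (j, n - j))"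
      using pt by simp
    show "summable (\<lambda>n. (L\<^sup>2 * (1 / (1 - \<sigma>))) * (\<Sum>j\<le>n. e (j, n - j)))"
      by (rule summable_mult[OF ts])
  qed
qed

end


context dec
begin

lemma T_adjoint: assumes f: "f \<in> l2" and g: "g \<in> l2"
  shows "l2inner (toeplitz \<Phi> f) g = l2inner f (toeplitz_adj \<Phi> g)"
proof -
  define a where "a j = norm (f j)" for j
  define c where "c j = norm (g j)" for j
  define F where "F = (\<Sum>j. (a j)\<^sup>2)"
  define G where "G = (\<Sum>j. (c j)\<^sup>2)"
  define b where "b = (\<lambda>(j::nat, k::nat). cinner (taylor_coeff \<Phi> k *v f j) (g (j + k)))"
  define d where "d = (\<lambda>(j::nat, k::nat). L * \<sigma> ^ k * (((a j)\<^sup>2 + (c (j + k))\<^sup>2) / 2))"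
  have Fp: "(\<Sum>j\<le>N. (a j)\<^sup>2) \<le> F" for N unfolding F_def a_def by (rule l2_partial[OF f]) auto
  have Gp: "(\<Sum>j\<le>N. (c (j + k))\<^sup>2) \<le> G" for N k unfolding G_def c_def by (rule l2_shift_partial[OF g])
  have F0: "0 \<le> F" unfolding F_def a_def by (rule suminf_nonneg) (use f in \<open>auto simp: l2_def\<close>)
  have G0: "0 \<le> G" unfolding G_def c_def by (rule suminf_nonneg) (use g in \<open>auto simp: l2_def\<close>)
  have bd: "norm (b x) \<le> d x" for x
  proof (cases x)
    case (Pair j k)
    have "norm (b x) \<le> norm (taylor_coeff \<Phi> k *v f j) * norm (g (j + k))"
      unfolding Pair b_def by (simp add: cinner_le)
    also have "\<dots> \<le> (L * \<sigma> ^ k * a j) * c (j + k)"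
      unfolding a_def c_def by (intro mult_right_mono Tb) auto
    also have "\<dots> = L * \<sigma> ^ k * (a j * c (j + k))" by (simp add: mult_ac)
    also have "\<dots> \<le> L * \<sigma> ^ k * (((a j)\<^sup>2 + (c (j + k))\<^sup>2) / 2)"
    proof (rule mult_left_mono)
      show "a j * c (j + k) \<le> ((a j)\<^sup>2 + (c (j + k))\<^sup>2) / 2"
        using sum_squares_bound[of "a j" "c (j + k)"] by simp
    qed (use KL sig in simp)
    finally show ?thesis unfolding Pair d_def by simp
  qed
  have ds: "d summable_on UNIV"
  proof (rule bdd_summable[where C="L * (1 / (1 - \<sigma>)) * ((F + G) / 2)"])
    show "0 \<le> d x" for x using KL sig by (cases x) (auto simp: d_def)
    fix N
    have "(\<Sum>j\<le>N. \<Sum>k\<le>N. d (j, k)) = (\<Sum>k\<le>N. \<Sum>j\<le>N. L * \<sigma> ^ k * (((a j)\<^sup>2 + (c (j + k))\<^sup>2) / 2))"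
      by (subst sum.swap) (simp add: d_def)
    also have "\<dots> = (\<Sum>k\<le>N. L * \<sigma> ^ k * (\<Sum>j\<le>N. ((a j)\<^sup>2 + (c (j + k))\<^sup>2) / 2))"
      by (simp only: sum_distrib_left)
    also have "\<dots> = (\<Sum>k\<le>N. L * \<sigma> ^ k * (((\<Sum>j\<le>N. (a j)\<^sup>2) + (\<Sum>j\<le>N. (c (j + k))\<^sup>2)) / 2))"
      by (simp only: sum_divide_distrib[symmetric] sum.distrib)
    also have "\<dots> \<le> (\<Sum>k\<le>N. L * \<sigma> ^ k * ((F + G) / 2))"
      using KL sig by (intro sum_mono mult_left_mono divide_right_mono add_mono Fp Gp) auto
    also have "\<dots> = L * (\<Sum>k\<le>N. \<sigma> ^ k) * ((F + G) / 2)"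
      by (simp add: sum_distrib_left sum_distrib_right mult_ac)
    also have "\<dots> \<le> L * (1 / (1 - \<sigma>)) * ((F + G) / 2)"
      using KL sig F0 G0 by (intro mult_right_mono mult_left_mono geom_partial') auto
    finally show "(\<Sum>j\<le>N. \<Sum>k\<le>N. d (j, k)) \<le> L * (1 / (1 - \<sigma>)) * ((F + G) / 2)" .
  qed
  have bs: "b summable_on UNIV"
    using Infinite_Sum.abs_summable_on_comparison_test'[OF ds bd] summable_on_iff_abs_summable_on_complex by blast
  have lhs: "l2inner (toeplitz \<Phi> f) g = infsum b UNIV"
  proof -
    have "cinner (toeplitz \<Phi> f i) (g i) = (\<Sum>j\<le>i. b (j, i - j))" for i
      unfolding toeplitz_def cinner_sum_left b_def by (intro sum.cong) auto
    hence "l2inner (toeplitz \<Phi> f) g = (\<Sum>i. \<Sum>j\<le>i. b (j, i - j))" by (simp add: l2inner_def)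
    also have "\<dots> = infsum (\<lambda>i. \<Sum>j\<le>i. b (j, i - j)) UNIV"
      by (rule summable_on_suminf[OF tri_sum(1)[OF bs]])
    also have "\<dots> = infsum b UNIV" by (rule tri_sum(2)[OF bs])
    finally show ?thesis .
  qed
  have rhs: "l2inner f (toeplitz_adj \<Phi> g) = infsum b UNIV"
  proof -
    have row: "cinner (f j) (toeplitz_adj \<Phi> g j) = infsum (\<lambda>k. b (j, k)) UNIV" for j
    proof -
      have "(\<lambda>k. cadj (taylor_coeff \<Phi> k) *v g (j + k)) sums toeplitz_adj \<Phi> g j"
        unfolding toeplitz_adj_def by (rule summable_sums[OF Tadj_summable[OF g]])
      from sums_cinner_right[OF this, of "f j"]
      have "(\<lambda>k. b (j, k)) sums cinner (f j) (toeplitz_adj \<Phi> g j)"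
        by (simp add: b_def cinner_adj)
      hence "cinner (f j) (toeplitz_adj \<Phi> g j) = suminf (\<lambda>k. b (j, k))" by (simp add: sums_iff)
      also have "\<dots> = infsum (\<lambda>k. b (j, k)) UNIV" by (rule summable_on_suminf[OF rows_sum(1)[OF bs]])
      finally show ?thesis .
    qed
    have "l2inner f (toeplitz_adj \<Phi> g) = (\<Sum>j. infsum (\<lambda>k. b (j, k)) UNIV)"
      by (simp add: l2inner_def row)
    also have "\<dots> = infsum (\<lambda>j. infsum (\<lambda>k. b (j, k)) UNIV) UNIV"
      by (rule summable_on_suminf[OF rows_sum(2)[OF bs]])
    also have "\<dots> = infsum b UNIV" by (rule rows_sum(3)[OF bs])
    finally show ?thesis .
  qed
  show ?thesis using lhs rhs by simp
qed

lemma Tadj_inj: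
  assumes dense: "\<forall>g\<in>l2. \<forall>\<epsilon>>0. \<exists>f\<in>l2. l2norm (\<lambda>i. toeplitz \<Phi> f i - g i) < \<epsilon>"
    and g: "g \<in> l2" and z: "toeplitz_adj \<Phi> g = (\<lambda>_. 0)"
  shows "g = (\<lambda>_. 0)"
proof -
  define G where "G = (\<Sum>j. (norm (g j))\<^sup>2)"
  have gs: "summable (\<lambda>j. (norm (g j))\<^sup>2)" using g by (simp add: l2_def)
  have G0: "0 \<le> G" unfolding G_def by (rule suminf_nonneg[OF gs]) simp
  have key: "sqrt G < e" if "e > 0" for e
  proof -
    obtain f where f: "f \<in> l2" and fe: "l2norm (\<lambda>i. toeplitz \<Phi> f i - g i) < e"
      using dense g \<open>e > 0\<close> by blast
    have Tf: "toeplitz \<Phi> f \<in> l2" by (rule T_l2[OF f])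
    have ts: "summable (\<lambda>i. (norm (toeplitz \<Phi> f i))\<^sup>2)" using Tf by (simp add: l2_def)
    have ins: "summable (\<lambda>i. cinner (toeplitz \<Phi> f i) (g i))" by (rule l2inner_summable[OF Tf g])
    have inner0: "(\<Sum>i. cinner (toeplitz \<Phi> f i) (g i)) = 0"
      using T_adjoint[OF f g] z by (simp add: l2inner_def)
    have "(\<Sum>i. (norm (toeplitz \<Phi> f i - g i))\<^sup>2)
          = (\<Sum>i. (norm (toeplitz \<Phi> f i))\<^sup>2 + (norm (g i))\<^sup>2 - 2 * Re (cinner (toeplitz \<Phi> f i) (g i)))"
      by (simp add: norm_diff_sq)
    also have "\<dots> = (\<Sum>i. (norm (toeplitz \<Phi> f i))\<^sup>2) + G - 2 * Re (\<Sum>i. cinner (toeplitz \<Phi> f i) (g i))"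
    proof -
      have s1: "summable (\<lambda>i. (norm (toeplitz \<Phi> f i))\<^sup>2 + (norm (g i))\<^sup>2)" by (rule summable_add[OF ts gs])
      have s2: "summable (\<lambda>i. 2 * Re (cinner (toeplitz \<Phi> f i) (g i)))"
        by (rule summable_mult[OF summable_Re[OF ins]])
      show ?thesis
        using suminf_diff[OF s1 s2] suminf_add[OF ts gs] suminf_mult[OF summable_Re[OF ins], of 2] Re_suminf[OF ins]
        by (simp add: G_def)
    qed
    also have "\<dots> = (\<Sum>i. (norm (toeplitz \<Phi> f i))\<^sup>2) + G" by (simp add: inner0)
    finally have eq: "(\<Sum>i. (norm (toeplitz \<Phi> f i - g i))\<^sup>2) = (\<Sum>i. (norm (toeplitz \<Phi> f i))\<^sup>2) + G" .
    have "G \<le> (\<Sum>i. (norm (toeplitz \<Phi> f i - g i))\<^sup>2)"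
      using eq suminf_nonneg[OF ts] by simp
    hence "sqrt G \<le> l2norm (\<lambda>i. toeplitz \<Phi> f i - g i)" by (simp add: l2norm_def)
    thus ?thesis using fe by simp
  qed
  have "sqrt G \<le> 0"
  proof (rule ccontr)
    assume "\<not> sqrt G \<le> 0"
    hence "sqrt G > 0" by simp
    from key[OF this] show False by simp
  qed
  hence "G = 0" using G0 by simp
  hence "\<forall>j. (norm (g j))\<^sup>2 = 0" using suminf_eq_zero_iff[OF gs] by (simp add: G_def)
  thus ?thesis by auto
qed

end


definition csub :: "(complex^'n) set \<Rightarrow> bool" where
  "csub X \<longleftrightarrow> 0 \<in> X \<and> (\<forall>x\<in>X. \<forall>y\<in>X. x + y \<in> X) \<and> (\<forall>c. \<forall>x\<in>X. c *s x \<in> X)"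

lemma scaleR_vsm: "r *\<^sub>R (x::complex^'n) = complex_of_real r *s x"
  by (simp add: Finite_Cartesian_Product.vec_eq_iff, simp add: scaleR_conv_of_real)

lemma inner_cinner: "inner x y = Re (cinner x (y::complex^'n))"
  by (simp add: inner_vec_def cinner_def inner_complex_def Re_sum)

lemma csub_diff: assumes "csub X" "x \<in> X" "y \<in> X" shows "x - y \<in> X"
proof -
  have "(-1) *s y \<in> X" using assms unfolding csub_def by blast
  hence "x + (-1) *s y \<in> X" using assms unfolding csub_def by blast
  moreover have "x + (-1) *s y = x - y" by (simp add: Finite_Cartesian_Product.vec_eq_iff)
  ultimately show ?thesis by simp
qed

lemma csub_subspace: assumes "csub X" shows "Real_Vector_Spaces.subspace X"
  using assms unfolding csub_def real_vector.subspace_def by (auto simp: scaleR_vsm)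

lemma cproj_ex: assumes "csub X" shows "\<exists>y\<in>X. \<forall>z\<in>X. cinner (x - y) z = 0"
proof -
  have sp: "Real_Vector_Spaces.span X = X" using csub_subspace[OF assms] by simp
  obtain y z where y: "y \<in> Real_Vector_Spaces.span X"
    and z: "\<And>w. w \<in> Real_Vector_Spaces.span X \<Longrightarrow> inner z w = 0" and xyz: "x = y + z"
    using orthogonal_subspace_decomp_exists[of X x] unfolding real_inner_class.orthogonal_def by metis
  have "\<forall>w\<in>X. cinner (x - y) w = 0"
  proof
    fix w assume w: "w \<in> X"
    have iw: "\<i> *s w \<in> X" using assms w unfolding csub_def by blast
    have r: "Re (cinner z w) = 0" using z[of w] w sp by (simp add: inner_cinner)
    have "Re (cinner z (\<i> *s w)) = 0" using z[of "\<i> *s w"] iw sp by (simp add: inner_cinner)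
    hence "Im (cinner z w) = 0" by (simp add: cinner_scale_right)
    hence "cinner z w = 0" using r by (simp add: complex_eq_iff)
    thus "cinner (x - y) w = 0" using xyz by simp
  qed
  thus ?thesis using y sp by auto
qed

lemma cproj_eq: assumes X: "csub X" and y: "y \<in> X" and o: "\<forall>z\<in>X. cinner (x - y) z = 0"
  shows "cproj X x = y"
  unfolding cproj_def
proof (rule the_equality)
  show "y \<in> X \<and> (\<forall>z\<in>X. cinner (x - y) z = 0)" using y o by simp
  fix y' assume y': "y' \<in> X \<and> (\<forall>z\<in>X. cinner (x - y') z = 0)"
  have d: "y' - y \<in> X" using csub_diff[OF X] y y' by blast
  have "cinner (y' - y) (y' - y) = cinner ((x - y) - (x - y')) (y' - y)" by (simp add: algebra_simps)
  also have "\<dots> = 0" using o y' d by (simp add: cinner_diff_left)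
  finally show "y' = y" by (simp add: cinner_self_eq_0)
qed

lemma cproj_in: assumes "csub X" shows "cproj X x \<in> X"
  using cproj_ex[OF assms, of x] cproj_eq[OF assms] by metis

lemma cproj_orth: assumes "csub X" "z \<in> X" shows "cinner (x - cproj X x) z = 0"
  using cproj_ex[OF assms(1), of x] cproj_eq[OF assms(1)] assms(2) by metis

lemma cproj_id: assumes "csub X" "x \<in> X" shows "cproj X x = x"
  using cproj_eq[OF assms] by simp

lemma cproj_add: assumes X: "csub X" shows "cproj X (a + b) = cproj X a + cproj X b"
proof (rule cproj_eq[OF X])
  show "cproj X a + cproj X b \<in> X" using X cproj_in[OF X] unfolding csub_def by blast
  show "\<forall>z\<in>X. cinner (a + b - (cproj X a + cproj X b)) z = 0"
  proof
    fix z assume z: "z \<in> X"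
    have "a + b - (cproj X a + cproj X b) = (a - cproj X a) + (b - cproj X b)" by (simp add: algebra_simps)
    hence "cinner (a + b - (cproj X a + cproj X b)) z = cinner (a - cproj X a) z + cinner (b - cproj X b) z"
      by (simp only: cinner_add_left)
    thus "cinner (a + b - (cproj X a + cproj X b)) z = 0"
      using cproj_orth[OF X z, of a] cproj_orth[OF X z, of b] by simp
  qed
qed

lemma cproj_scale: assumes X: "csub X" shows "cproj X (c *s a) = c *s cproj X a"
proof (rule cproj_eq[OF X])
  show "c *s cproj X a \<in> X" using X cproj_in[OF X] unfolding csub_def by blast
  show "\<forall>z\<in>X. cinner (c *s a - c *s cproj X a) z = 0"
  proof
    fix z assume z: "z \<in> X"
    have "c *s a - c *s cproj X a = c *s (a - cproj X a)"
      by (simp add: Finite_Cartesian_Product.vec_eq_iff algebra_simps)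
    hence "cinner (c *s a - c *s cproj X a) z = c * cinner (a - cproj X a) z"
      by (simp only: cinner_scale_left)
    thus "cinner (c *s a - c *s cproj X a) z = 0"
      using cproj_orth[OF X z, of a] by simp
  qed
qed

lemma cproj_diff: assumes X: "csub X" shows "cproj X (a - b) = cproj X a - cproj X b"
proof -
  have "a - b = a + (-1) *s b" by (simp add: Finite_Cartesian_Product.vec_eq_iff)
  hence "cproj X (a - b) = cproj X a + (-1) *s cproj X b" by (simp only: cproj_add[OF X] cproj_scale[OF X])
  also have "\<dots> = cproj X a - cproj X b" by (simp add: Finite_Cartesian_Product.vec_eq_iff)
  finally show ?thesis .
qed


lemma Wobs_add: "Wobs C A (x + y) = (\<lambda>j. Wobs C A x j + Wobs C A y j)"
  by (simp add: Wobs_def matrix_vector_right_distrib)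
lemma Wobs_diff: "Wobs C A (x - y) = (\<lambda>j. Wobs C A x j - Wobs C A y j)"
  by (simp add: Wobs_def matrix_vector_mult_diff_distrib)
lemma Wobs_scale: "Wobs C A (c *s x) = (\<lambda>j. c *s Wobs C A x j)"
  by (simp add: Wobs_def vector_scalar_commute)
lemma Wobs_zero: "Wobs C A 0 = (\<lambda>_. 0)"
  by (simp add: Wobs_def)

lemma entry_bound_le0: assumes "\<And>k i j. norm (M k $ i $ j) \<le> c * r ^ k" shows "0 \<le> c"
proof -
  have "norm (M 0 $ undefined $ undefined) \<le> c" using assms[of 0] by simp
  thus ?thesis using order_trans[OF norm_ge_zero] by blast
qed

theorem lemma2p5:
  fixes A :: "complex^'n^'n" and C :: "complex^'n^'m" and \<Gamma> :: "complex^'m^'n"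
    and R0 :: "complex^'m^'m" and R :: "complex \<Rightarrow> complex^'m^'m"
    and \<Phi> :: "complex \<Rightarrow> complex^'m^'r" and C\<Phi> :: "complex^'n^'r"
    and X :: "(complex^'n) set" and M :: "(nat \<Rightarrow> complex^'r) set"
    and Q :: "complex^'n^'n"
    and \<Omega> :: "complex^'n \<Rightarrow> complex^'n" and \<Delta> :: "complex^'n \<Rightarrow> complex^'n"
  assumes A_stable: "stable A"
    and R_def: "\<And>z. R z = csmat z (C ** matrix_inv (mat 1 - csmat z A) ** \<Gamma>) + R0
                         + cadj \<Gamma> ** matrix_inv (csmat z (mat 1) - cadj A) ** cadj C"
    and R_nonzero: "\<exists>z. det (mat 1 - csmat z A) \<noteq> 0 \<and> det (csmat z (mat 1) - cadj A) \<noteq> 0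
                        \<and> R z \<noteq> 0"
    and R_psd: "\<And>\<zeta>. norm \<zeta> = 1 \<Longrightarrow> psd (R \<zeta>)"
    and obs: "observable C A"
    and outer: "outer_spectral_factor R
                  (\<lambda>z. det (mat 1 - csmat z A) \<noteq> 0 \<and> det (csmat z (mat 1) - cadj A) \<noteq> 0) \<Phi>"
    and X_def: "X = {x. Wobs C A x \<in> toeplitz_adj \<Phi> ` l2}"
    and C\<Phi>_realiz: "\<And>z. det (mat 1 - csmat z A) \<noteq> 0 \<Longrightarrow> regular_at \<Phi> z \<Longrightarrow>
                      \<Phi> z = \<Phi> 0 + csmat z (C\<Phi> ** matrix_inv (mat 1 - csmat z A) ** \<Gamma>)"
    and C\<Phi>_X: "\<And>x. x \<in> X \<Longrightarrow> Wobs C A x = toeplitz_adj \<Phi> (Wobs C\<Phi> A x)"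
    and Q_def: "Q = obs_gramian C\<Phi> A"
    and \<Omega>_def: "\<And>x. \<Omega> x = cproj X (Q *v x)"
    and \<Delta>_def: "\<And>y. \<Delta> y = (THE x. x \<in> X \<and> \<Omega> x = cproj X y)"
    and M_def: "M = {f \<in> l2. toeplitz_adj \<Phi> f \<in> range (Wobs C A)}"
  shows "bij_betw \<Omega> X X
         \<and> (\<forall>f\<in>l2. l2proj M f = Wobs C\<Phi> A (\<Delta> (Wobs_adj C\<Phi> A f)))"
  proof -
  note dense = outer[unfolded outer_spectral_factor_def, THEN conjunct2, THEN conjunct2]
  have ratH: "rat_Hinf \<Phi>" using outer unfolding outer_spectral_factor_def by blast
  obtain c1 \<rho> where \<rho>: "0 < \<rho>" "\<rho> < 1" and Ad: "\<And>k i j. norm (mpow A k $ i $ j) \<le> c1 * \<rho> ^ k"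
    using stable_decay[OF A_stable] by blast
  obtain c2 \<sigma> where \<sigma>: "0 < \<sigma>" "\<sigma> < 1" and Td: "\<And>k i j. norm (taylor_coeff \<Phi> k $ i $ j) \<le> c2 * \<sigma> ^ k"
    using rat_Hinf_decay[OF ratH] by blast
  have c1: "0 \<le> c1" by (rule entry_bound_le0[OF Ad])
  have c2: "0 \<le> c2" by (rule entry_bound_le0[OF Td])
  obtain BC where BC: "BC \<ge> 0" "\<And>v. norm (C\<Phi> *v v) \<le> BC * norm v" using mat_bound by blast
  obtain BCa where BCa: "BCa \<ge> 0" "\<And>v. norm (cadj C\<Phi> *v v) \<le> BCa * norm v" using mat_bound by blast
  define N where "N = real CARD('n)"
  define K where "K = N * (N * c1) * (BC + BCa)"
  define L where "L = real CARD('r) * (real CARD('m) * c2)"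
  have N0: "0 \<le> N" by (simp add: N_def)
  have Apv: "norm (mpow A k *v v) \<le> N * (N * c1) * \<rho> ^ k * norm v" for k v
    using mv_bound_entries[where M="mpow A k", OF Ad, of v] by (simp only: N_def mult_ac)
  have Apva: "norm (cadj (mpow A k) *v v) \<le> N * (N * c1) * \<rho> ^ k * norm v" for k v
  proof -
    have e: "norm (cadj (mpow A k) $ i $ j) \<le> c1 * \<rho> ^ k" for i j
      unfolding cadj_entry complex_mod_cnj by (rule Ad)
    show ?thesis using mv_bound_entries[where M="cadj (mpow A k)", OF e, of v] by (simp only: N_def mult_ac)
  qed
  interpret D: dec A C\<Phi> \<Phi> K \<rho> L \<sigma>
  proof
    show "0 < \<rho>" "\<rho> < 1" "0 < \<sigma>" "\<sigma> < 1" by (fact \<rho>(1) \<rho>(2) \<sigma>(1) \<sigma>(2))+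
    show "0 \<le> K" using c1 N0 BC BCa by (simp add: K_def)
    show "0 \<le> L" using c2 by (simp add: L_def)
    show "\<And>k v. norm (C\<Phi> *v (mpow A k *v v)) \<le> K * \<rho> ^ k * norm v"
    proof -
      fix k v
      have f0: "0 \<le> N * (N * c1) * \<rho> ^ k" using c1 N0 \<rho> by simp
      have "norm (C\<Phi> *v (mpow A k *v v)) \<le> BC * norm (mpow A k *v v)" by (rule BC(2))
      also have "\<dots> \<le> BC * (N * (N * c1) * \<rho> ^ k * norm v)" by (rule mult_left_mono[OF Apv BC(1)])
      also have "\<dots> \<le> (BC + BCa) * (N * (N * c1) * \<rho> ^ k * norm v)"
        by (rule mult_right_mono) (use BCa f0 in auto)
      also have "\<dots> = K * \<rho> ^ k * norm v" by (simp only: K_def mult_ac)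
      finally show "norm (C\<Phi> *v (mpow A k *v v)) \<le> K * \<rho> ^ k * norm v" .
    qed
    show "\<And>k v. norm (cadj (mpow A k) *v (cadj C\<Phi> *v v)) \<le> K * \<rho> ^ k * norm v"
    proof -
      fix k v
      have f0: "0 \<le> N * (N * c1) * \<rho> ^ k" using c1 N0 \<rho> by simp
      have "norm (cadj (mpow A k) *v (cadj C\<Phi> *v v)) \<le> N * (N * c1) * \<rho> ^ k * norm (cadj C\<Phi> *v v)" by (rule Apva)
      also have "\<dots> \<le> N * (N * c1) * \<rho> ^ k * (BCa * norm v)" by (rule mult_left_mono[OF BCa(2) f0])
      also have "\<dots> = BCa * (N * (N * c1) * \<rho> ^ k * norm v)" by (simp only: mult_ac)
      also have "\<dots> \<le> (BC + BCa) * (N * (N * c1) * \<rho> ^ k * norm v)"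
        by (rule mult_right_mono) (use BC f0 in auto)
      also have "\<dots> = K * \<rho> ^ k * norm v" by (simp only: K_def mult_ac)
      finally show "norm (cadj (mpow A k) *v (cadj C\<Phi> *v v)) \<le> K * \<rho> ^ k * norm v" .
    qed
    show "\<And>k v. norm (taylor_coeff \<Phi> k *v v) \<le> L * \<sigma> ^ k * norm v"
    proof -
      fix k v
      show "norm (taylor_coeff \<Phi> k *v v) \<le> L * \<sigma> ^ k * norm v"
        using mv_bound_entries[where M="taylor_coeff \<Phi> k", OF Td, of v] by (simp only: L_def mult_ac)
    qed
    show "\<And>k v. norm (cadj (taylor_coeff \<Phi> k) *v v) \<le> L * \<sigma> ^ k * norm v"
    proof -
      fix k v
      have e: "norm (cadj (taylor_coeff \<Phi> k) $ i $ j) \<le> c2 * \<sigma> ^ k" for i j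
        unfolding cadj_entry complex_mod_cnj by (rule Td)
      show "norm (cadj (taylor_coeff \<Phi> k) *v v) \<le> L * \<sigma> ^ k * norm v"
        using mv_bound_entries[where M="cadj (taylor_coeff \<Phi> k)", OF e, of v] by (simp only: L_def mult_ac)
    qed
  qed
  let ?V = "Wobs C\<Phi> A"
  let ?W = "Wobs C A"
  let ?T = "toeplitz_adj \<Phi>"
  let ?Va = "Wobs_adj C\<Phi> A"
  have Xcs: "csub X" unfolding csub_def
  proof (intro conjI ballI allI)
    have e0: "?W 0 = ?T (\<lambda>_. 0)" by (simp add: Wobs_zero D.Tadj_zero)
    have "?T (\<lambda>_. 0) \<in> ?T ` l2" by (rule imageI[OF l2_zero])
    thus "0 \<in> X" unfolding X_def using e0 by simp
  next
    fix x y assume "x \<in> X" "y \<in> X"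
    then obtain g1 g2 where g: "g1 \<in> l2" "g2 \<in> l2" "?W x = ?T g1" "?W y = ?T g2" unfolding X_def by auto
    have "?W (x + y) = ?T (\<lambda>j. g1 j + g2 j)" using g by (simp add: Wobs_add D.Tadj_add)
    thus "x + y \<in> X" unfolding X_def using l2_add[OF g(1,2)] by auto
  next
    fix c x assume "x \<in> X"
    then obtain g where g: "g \<in> l2" "?W x = ?T g" unfolding X_def by auto
    have "?W (c *s x) = ?T (\<lambda>j. c *s g j)" using g by (simp add: Wobs_scale D.Tadj_scale)
    thus "c *s x \<in> X" unfolding X_def using l2_scale[OF g(1)] by auto
  qed
  have Om_in: "\<Omega> x \<in> X" for x unfolding \<Omega>_def by (rule cproj_in[OF Xcs])
  have Om_add: "\<Omega> (x + y) = \<Omega> x + \<Omega> y" for x y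
    unfolding \<Omega>_def by (simp add: matrix_vector_right_distrib cproj_add[OF Xcs])
  have Om_diff: "\<Omega> (x - y) = \<Omega> x - \<Omega> y" for x y
    unfolding \<Omega>_def by (simp add: matrix_vector_mult_diff_distrib cproj_diff[OF Xcs])
  have Om_scale: "\<Omega> (c *s x) = c *s \<Omega> x" for c x
    unfolding \<Omega>_def by (simp add: vector_scalar_commute cproj_scale[OF Xcs])
  have Qin: "l2inner (?V x) (?V z) = cinner (Q *v x) z" for x z
    unfolding Q_def by (rule D.Q_inner)
  have Om0: "x = 0" if x: "x \<in> X" and o: "\<Omega> x = 0" for x
  proof -
    have "cinner (Q *v x - cproj X (Q *v x)) x = 0" by (rule cproj_orth[OF Xcs x])
    hence "cinner (Q *v x) x = 0" using o by (simp add: \<Omega>_def)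
    hence "l2inner (?V x) (?V x) = 0" by (simp add: Qin)
    hence V0: "?V x = (\<lambda>_. 0)" by (rule l2inner_self_zero[OF D.V_l2])
    have "?W x = (\<lambda>_. 0)" using C\<Phi>_X[OF x] V0 D.Tadj_zero by simp
    hence "\<forall>j. C *v (mpow A j *v x) = 0" by (simp add: Wobs_def fun_eq_iff)
    thus "x = 0" using obs unfolding observable_def by blast
  qed
  have inj: "inj_on \<Omega> X"
  proof (rule inj_onI)
    fix x y assume xy: "x \<in> X" "y \<in> X" "\<Omega> x = \<Omega> y"
    have "\<Omega> (x - y) = 0" using xy by (simp add: Om_diff)
    hence "x - y = 0" using Om0 csub_diff[OF Xcs xy(1,2)] by blast
    thus "x = y" by simp
  qed
  have lin: "linear \<Omega>"
  proof (rule linearI)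
    show "\<Omega> (x + y) = \<Omega> x + \<Omega> y" for x y by (rule Om_add)
    show "\<Omega> (r *\<^sub>R x) = r *\<^sub>R \<Omega> x" for r x by (simp add: scaleR_vsm Om_scale)
  qed
  have sX: "Real_Vector_Spaces.subspace X" by (rule csub_subspace[OF Xcs])
  have img: "\<Omega> ` X = X"
  proof (rule eucl.subspace_dim_equal)
    show "Real_Vector_Spaces.subspace (\<Omega> ` X)" by (rule real_vector.linear_subspace_image[OF lin sX])
    show "Real_Vector_Spaces.subspace X" by (rule sX)
    show "\<Omega> ` X \<subseteq> X" using Om_in by auto
    have sp: "span X = X" using sX by simp
    have "inj_on \<Omega> (span X)" unfolding sp by (rule inj)
    thus "dim X \<le> dim (\<Omega> ` X)"
      using eucl.dim_image_eq[OF lin] by (simp del: span_eq_iff)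
  qed
  have bij: "bij_betw \<Omega> X X" unfolding bij_betw_def using inj img by simp
  have Dl: "\<Delta> y \<in> X \<and> \<Omega> (\<Delta> y) = cproj X y" for y
  proof -
    have "cproj X y \<in> \<Omega> ` X" unfolding img by (rule cproj_in[OF Xcs])
    then obtain x where x: "cproj X y = \<Omega> x" "x \<in> X" by (rule imageE)
    have "\<exists>!x. x \<in> X \<and> \<Omega> x = cproj X y"
    proof (rule ex1I[of _ x])
      show "x \<in> X \<and> \<Omega> x = cproj X y" using x(2) x(1)[symmetric] by (rule conjI)
      fix x' assume x': "x' \<in> X \<and> \<Omega> x' = cproj X y"
      have eqx: "\<Omega> x' = \<Omega> x" using x'[THEN conjunct2] x(1) by (rule trans)
      show "x' = x" by (rule inj_onD[OF inj eqx conjunct1[OF x'] x(2)])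
    qed
    from theI'[OF this] show ?thesis unfolding \<Delta>_def .
  qed
  have Mchar: "f \<in> M \<longleftrightarrow> (\<exists>x\<in>X. f = ?V x)" for f
  proof
    assume fM: "f \<in> M"
    hence fl: "f \<in> l2" and "?T f \<in> range ?W" unfolding M_def by auto
    then obtain x0 where x0: "?T f = ?W x0" by auto
    have "?W x0 \<in> ?T ` l2" using imageI[OF fl, of ?T] x0 by simp
    hence x0X: "x0 \<in> X" unfolding X_def by simp
    have "?T (\<lambda>j. f j - ?V x0 j) = (\<lambda>i. ?T f i - ?T (?V x0) i)" by (rule D.Tadj_diff[OF fl D.V_l2])
    also have "\<dots> = (\<lambda>_. 0)" using x0 C\<Phi>_X[OF x0X] by simp
    finally have "(\<lambda>j. f j - ?V x0 j) = (\<lambda>_. 0)"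
      by (intro D.Tadj_inj[OF dense] l2_diff[OF fl D.V_l2])
    hence "f = ?V x0" by (simp add: fun_eq_iff)
    thus "\<exists>x\<in>X. f = ?V x" using x0X by blast
  next
    assume "\<exists>x\<in>X. f = ?V x"
    then obtain x where x: "x \<in> X" "f = ?V x" by blast
    have "?T f = ?W x" using x C\<Phi>_X[OF x(1)] by simp
    hence "?T f \<in> range ?W" by (metis rangeI)
    thus "f \<in> M" unfolding M_def using x D.V_l2 by simp
  qed
  have part2: "l2proj M f = ?V (\<Delta> (?Va f))" if f: "f \<in> l2" for f
  proof -
    define x where "x = \<Delta> (?Va f)"
    have xX: "x \<in> X" and Omx: "\<Omega> x = cproj X (?Va f)" using Dl[of "?Va f"] by (auto simp: x_def)
    have orth: "l2inner (\<lambda>j. f j - ?V x j) h = 0" if h: "h \<in> M" for h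
    proof -
      obtain z where z: "z \<in> X" "h = ?V z" using h Mchar by blast
      have "l2inner (\<lambda>j. f j - ?V x j) h = l2inner f (?V z) - l2inner (?V x) (?V z)"
        unfolding z(2) by (rule l2inner_diff_left[OF f D.V_l2 D.V_l2])
      also have "\<dots> = cinner (?Va f) z - cinner (Q *v x) z" by (simp add: D.Vadj_inner[OF f] Qin)
      also have "\<dots> = cinner (?Va f - cproj X (?Va f)) z - cinner (Q *v x - cproj X (Q *v x)) z"
        using Omx by (simp add: \<Omega>_def cinner_diff_left)
      also have "\<dots> = 0" by (simp add: cproj_orth[OF Xcs z(1)])
      finally show ?thesis .
    qed
    have VxM: "?V x \<in> M" using Mchar xX by blast
    show ?thesis unfolding x_def[symmetric] l2proj_def
    proof (rule the_equality)
      show "?V x \<in> M \<and> (\<forall>h\<in>M. l2inner (\<lambda>j. f j - ?V x j) h = 0)" using VxM orth by blast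
      fix g assume g: "g \<in> M \<and> (\<forall>h\<in>M. l2inner (\<lambda>j. f j - g j) h = 0)"
      obtain x' where x': "x' \<in> X" "g = ?V x'" using g Mchar by blast
      define Dd where "Dd = (\<lambda>j. g j - ?V x j)"
      have DdV: "Dd = ?V (x' - x)" unfolding Dd_def x'(2) by (simp add: Wobs_diff)
      have DdM: "Dd \<in> M" using Mchar DdV csub_diff[OF Xcs x'(1) xX] by blast
      have gl: "g \<in> l2" using x' D.V_l2 by simp
      have Dl2: "Dd \<in> l2" unfolding DdV by (rule D.V_l2)
      have eqf: "(\<lambda>j. (f j - ?V x j) - (f j - g j)) = Dd" by (simp add: Dd_def fun_eq_iff)
      have "l2inner (\<lambda>j. (f j - ?V x j) - (f j - g j)) Dd = l2inner (\<lambda>j. f j - ?V x j) Dd - l2inner (\<lambda>j. f j - g j) Dd"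
        by (rule l2inner_diff_left[OF l2_diff[OF f D.V_l2] l2_diff[OF f gl] Dl2])
      hence "l2inner Dd Dd = l2inner (\<lambda>j. f j - ?V x j) Dd - l2inner (\<lambda>j. f j - g j) Dd"
        by (simp only: eqf)
      also have "\<dots> = 0" using orth[OF DdM] g DdM by simp
      finally have "Dd = (\<lambda>_. 0)" by (rule l2inner_self_zero[OF Dl2])
      thus "g = ?V x" by (simp add: Dd_def fun_eq_iff)
    qed
  qed
  show ?thesis using bij part2 by blast
qed


end
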